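(* Let $\kappa,\kappa'$ be two functions as in the standing assumptions with $\lim_{t\to\infty}\kappa'(t)/\kappa(t)=0$. Then $\partial_{\kappa'}X_A\subsetneq\partial_\kappa X_A$, i.e. the inclusion is strict.
   Context: $A=\mathbb Z^2*\mathbb Z=\langle g_1,g_2,g_3\mid[g_1,g_2]\rangle$ and $X_A$ is the universal cover of its Salvetti complex: a CAT(0) tree of flats, each flat a Euclidean plane tiled by unit squares (cosets of $\langle g_1,g_2\rangle$), joined by unit-length edges labelled $g_3$ attached at lattice points; base point $\mathfrak o$ a lattice point of a flat at which a $g_3$ edge is attached; $\|x\|=d(\mathfrak o,x)$. For $\lambda:[0,\infty)\to[1,\infty)$ monotone increasing, concave and sublinear, put $\lambda(x)=\lambda(\|x\|)$, $\mathcal N_\lambda(Z,n)=\{x:d(x,Z)\le n\lambda(x)\}$; a closed set $Z$ is $\lambda$--contracting if there is $c_Z$ with $\operatorname{diam}(x_Z\cup y_Z)\le c_Z\lambda(x)$ whenever $d(x,y)\le d(x,Z)$; quasi-geodesic rays are continuous quasi-isometric embeddings of $[0,\infty)$ starting at $\mathfrak o$, two rays $\lambda$--fellow travel if each lies in some $\mathcal N_\lambda(\cdot,n)$ of the other; $\partial_\lambda X_A$ is the set of $\lambda$--fellow-travelling classes of $\lambda$--contracting quasi-geodesic rays (equivalently, the set of $\lambda$--contracting geodesic rays from $\mathfrak o$). *)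

theory Defs
  imports "HOL-Analysis.Analysis"
begin

definition setdist_d :: "('a \<Rightarrow> 'a \<Rightarrow> real) \<Rightarrow> 'a \<Rightarrow> 'a set \<Rightarrow> real" where
  "setdist_d d x Z = Inf ((\<lambda>z. d x z) ` Z)"

definition proj_d :: "('a \<Rightarrow> 'a \<Rightarrow> real) \<Rightarrow> 'a \<Rightarrow> 'a set \<Rightarrow> 'a set" where
  "proj_d d x Z = {z \<in> Z. d x z = setdist_d d x Z}"

definition diam_d :: "('a \<Rightarrow> 'a \<Rightarrow> real) \<Rightarrow> 'a set \<Rightarrow> real" where
  "diam_d d S = Sup {d a b | a b. a \<in> S \<and> b \<in> S}"

definition closed_d :: "'a set \<Rightarrow> ('a \<Rightarrow> 'a \<Rightarrow> real) \<Rightarrow> 'a set \<Rightarrow> bool" where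
  "closed_d X d Z \<longleftrightarrow> Z \<subseteq> X \<and> (\<forall>x\<in>X. (\<forall>e>0. \<exists>z\<in>Z. d x z < e) \<longrightarrow> x \<in> Z)"

text \<open>Z is lam-contracting; lam(x) means lam(d b x)\<close>
definition contracting :: "'a set \<Rightarrow> ('a \<Rightarrow> 'a \<Rightarrow> real) \<Rightarrow> 'a \<Rightarrow> (real \<Rightarrow> real) \<Rightarrow> 'a set \<Rightarrow> bool" where
  "contracting X d b lam Z \<longleftrightarrow> closed_d X d Z \<and>
     (\<exists>c. \<forall>x\<in>X. \<forall>y\<in>X. d x y \<le> setdist_d d x Z \<longrightarrow>
        diam_d d (proj_d d x Z \<union> proj_d d y Z) \<le> c * lam (d b x))"

definition geo_ray :: "'a set \<Rightarrow> ('a \<Rightarrow> 'a \<Rightarrow> real) \<Rightarrow> 'a \<Rightarrow> (real \<Rightarrow> 'a) \<Rightarrow> bool" where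
  "geo_ray X d b \<gamma> \<longleftrightarrow> \<gamma> 0 = b \<and> (\<forall>t\<ge>0. \<gamma> t \<in> X) \<and>
     (\<forall>s\<ge>0. \<forall>t\<ge>0. d (\<gamma> s) (\<gamma> t) = \<bar>s - t\<bar>)"

text \<open>The sublinearly Morse boundary, as the set of (images of) lam-contracting geodesic rays from o.
  A geodesic ray from o is determined by its image.\<close>
definition bdry :: "'a set \<Rightarrow> ('a \<Rightarrow> 'a \<Rightarrow> real) \<Rightarrow> 'a \<Rightarrow> (real \<Rightarrow> real) \<Rightarrow> 'a set set" where
  "bdry X d b lam = {\<gamma> ` {0..} | \<gamma>. geo_ray X d b \<gamma> \<and> contracting X d b lam (\<gamma> ` {0..})}"

text \<open>standing assumptions on lam\<close>
definition admissible :: "(real \<Rightarrow> real) \<Rightarrow> bool" where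
  "admissible lam \<longleftrightarrow> mono_on {0..} lam \<and> concave_on {0..} lam \<and> (\<forall>t\<ge>0. 1 \<le> lam t)
     \<and> ((\<lambda>t. lam t / t) \<longlongrightarrow> 0) at_top"

section \<open>The space X_A: universal cover of the Salvetti complex of Z^2 * Z\<close>

text \<open>A flat (coset g<g1,g2>) is coded by a list [(h0,e1),(h1,e2),...,(h_{k-1},e_k)] meaning
  h0 g3^{e1} h1 g3^{e2} ... g3^{ek} <g1,g2>, with h_i in Z^2 and e_i = +1 (True) / -1 (False). A vertex (group element) is a flat plus a lattice
  point of it; the flat is entered via its g3-edge at the origin.\<close>

type_synonym word = "((int \<times> int) \<times> bool) list"

definition reduced :: "word \<Rightarrow> bool" where
  "reduced L \<longleftrightarrow> (\<forall>i. Suc i < length L \<longrightarrow>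
      \<not> (fst (L ! Suc i) = (0, 0) \<and> snd (L ! Suc i) \<noteq> snd (L ! i)))"

datatype xa_pt = FP word complex | EP word "int \<times> int" real

definition lat :: "int \<times> int \<Rightarrow> complex" where
  "lat p = Complex (of_int (fst p)) (of_int (snd p))"

text \<open>the endpoint g g3 of the g3-edge leaving the vertex g = (L,p)\<close>
definition edge_target :: "word \<Rightarrow> int \<times> int \<Rightarrow> xa_pt" where
  "edge_target L p = (if L \<noteq> [] \<and> snd (last L) = False \<and> p = (0, 0)
      then FP (butlast L) (lat (fst (last L)))
      else FP (L @ [(p, True)]) 0)"

definition XA :: "xa_pt set" where
  "XA = {FP L z | L z. reduced L} \<union> {EP L p t | L p t. reduced L \<and> 0 < t \<and> t < 1}"

definition xa_o :: xa_pt where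
  "xa_o = FP [] 0"

text \<open>closed unit edge from vertex (L,p) to edge_target L p, with its arclength parameter\<close>
definition xa_edge :: "word \<Rightarrow> int \<times> int \<Rightarrow> xa_pt set" where
  "xa_edge L p = {FP L (lat p), edge_target L p} \<union> {EP L p t | t. 0 < t \<and> t < 1}"

definition epar :: "word \<Rightarrow> int \<times> int \<Rightarrow> xa_pt \<Rightarrow> real" where
  "epar L p x = (if x = FP L (lat p) then 0 else if x = edge_target L p then 1
      else (case x of EP _ _ t \<Rightarrow> t | FP _ _ \<Rightarrow> 0))"

definition xa_step :: "xa_pt \<Rightarrow> xa_pt \<Rightarrow> real \<Rightarrow> bool" where
  "xa_step x y c \<longleftrightarrow>
     (\<exists>L z w. reduced L \<and> x = FP L z \<and> y = FP L w \<and> c = cmod (z - w)) \<or>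
     (\<exists>L p. reduced L \<and> x \<in> xa_edge L p \<and> y \<in> xa_edge L p \<and> c = \<bar>epar L p x - epar L p y\<bar>)"

definition xa_dist :: "xa_pt \<Rightarrow> xa_pt \<Rightarrow> real" where
  "xa_dist x y = Inf {sum_list cs | xs cs. xs \<noteq> [] \<and> hd xs = x \<and> last xs = y \<and>
      length cs + 1 = length xs \<and> (\<forall>i<length cs. xa_step (xs ! i) (xs ! Suc i) (cs ! i))}"

end

theory Submission
  imports Defs
begin


inductive ch :: "xa_pt \<Rightarrow> xa_pt \<Rightarrow> real \<Rightarrow> bool" where
  ch_refl: "ch x x 0"
| ch_step: "xa_step x y c \<Longrightarrow> ch y z e \<Longrightarrow> ch x z (c + e)"

lemma step_nonneg: "xa_step x y c \<Longrightarrow> 0 \<le> c"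
  unfolding xa_step_def by auto

lemma step_sym: "xa_step x y c \<Longrightarrow> xa_step y x c"
  unfolding xa_step_def by (metis abs_minus_commute norm_minus_commute)

lemma ch_nonneg: "ch x y c \<Longrightarrow> 0 \<le> c"
  by (induction rule: ch.induct) (auto dest: step_nonneg)

lemma ch_trans: "ch x y c \<Longrightarrow> ch y z e \<Longrightarrow> ch x z (c + e)"
proof (induction arbitrary: z e rule: ch.induct)
  case (ch_refl x) then show ?case by simp
next
  case (ch_step x y c z' e')
  then show ?case using ch.ch_step[of x y c z "e' + e"] by (simp add: add.assoc)
qed

lemma ch_one: "xa_step x y c \<Longrightarrow> ch x y c"
  using ch_step[of x y c y 0] ch_refl by simp

lemma ch_sym: "ch x y c \<Longrightarrow> ch y x c"
proof (induction rule: ch.induct)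
  case (ch_refl x) then show ?case by (rule ch.ch_refl)
next
  case (ch_step x y c z e)
  then show ?case using ch_trans[OF ch_step(3) ch_one[OF step_sym[OF ch_step(1)]]]
    by (simp add: add.commute)
qed

lemma chainset_ch:
  assumes "xs \<noteq> []" "length cs + 1 = length xs"
    "\<forall>i<length cs. xa_step (xs ! i) (xs ! Suc i) (cs ! i)"
  shows "ch (hd xs) (last xs) (sum_list cs)"
  using assms
proof (induction cs arbitrary: xs)
  case Nil
  then obtain x where "xs = [x]" by (cases xs) auto
  then show ?case by (simp add: ch_refl)
next
  case (Cons c cs)
  then obtain x xs' where xs: "xs = x # xs'" by (cases xs) auto
  with Cons.prems have ne: "xs' \<noteq> []" by auto
  have "\<forall>i<length cs. xa_step (xs' ! i) (xs' ! Suc i) (cs ! i)"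
    using Cons.prems(3) xs by fastforce
  then have h: "ch (hd xs') (last xs') (sum_list cs)"
    using Cons.IH ne Cons.prems xs by auto
  have "xa_step x (hd xs') c" using Cons.prems(3) xs ne
    by (metis hd_conv_nth length_Cons nth_Cons_0 nth_Cons_Suc zero_less_Suc)
  then show ?case using ch_step[OF _ h] xs ne by simp
qed

lemma ch_chainset:
  assumes "ch x y c"
  shows "\<exists>xs cs. c = sum_list cs \<and> xs \<noteq> [] \<and> hd xs = x \<and> last xs = y \<and>
      length cs + 1 = length xs \<and> (\<forall>i<length cs. xa_step (xs ! i) (xs ! Suc i) (cs ! i))"
  using assms
proof (induction rule: ch.induct)
  case (ch_refl x)
  show ?case by (rule exI[of _ "[x]"], rule exI[of _ "[]"]) simp
next
  case (ch_step x y c z e)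
  then obtain xs cs where h: "e = sum_list cs" "xs \<noteq> []" "hd xs = y" "last xs = z"
    "length cs + 1 = length xs" "\<forall>i<length cs. xa_step (xs ! i) (xs ! Suc i) (cs ! i)" by blast
  show ?case
  proof (rule exI[of _ "x # xs"], rule exI[of _ "c # cs"], intro conjI)
    show "\<forall>i<length (c # cs). xa_step ((x # xs) ! i) ((x # xs) ! Suc i) ((c # cs) ! i)"
    proof (intro allI impI)
      fix i assume "i < length (c # cs)"
      then show "xa_step ((x # xs) ! i) ((x # xs) ! Suc i) ((c # cs) ! i)"
        using h ch_step(1) by (cases i) (auto simp: hd_conv_nth)
    qed
  qed (use h in auto)
qed

lemma dist_ch: "xa_dist x y = Inf {c. ch x y c}"
proof -
  have "{sum_list cs | xs cs. xs \<noteq> [] \<and> hd xs = x \<and> last xs = y \<and>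
      length cs + 1 = length xs \<and> (\<forall>i<length cs. xa_step (xs ! i) (xs ! Suc i) (cs ! i))}
     = {c. ch x y c}"
    using chainset_ch ch_chainset by fastforce
  then show ?thesis unfolding xa_dist_def by simp
qed

lemma dist_le: "ch x y c \<Longrightarrow> xa_dist x y \<le> c"
  unfolding dist_ch by (rule cInf_lower) (auto intro: bdd_belowI[of _ 0] ch_nonneg)

lemma dist_nonneg: "ch x y c \<Longrightarrow> 0 \<le> xa_dist x y"
  unfolding dist_ch by (rule cInf_greatest) (auto intro: ch_nonneg)

lemma dist_refl: "xa_dist x x = 0"
  using dist_le[OF ch_refl] dist_nonneg[OF ch_refl] by (meson order.antisym)

lemma dist_step: "xa_step x y c \<Longrightarrow> xa_dist x y \<le> c"
  by (rule dist_le[OF ch_one])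

lemma dist_sym: "xa_dist x y = xa_dist y x"
proof -
  have "Collect (ch x y) = Collect (ch y x)" using ch_sym by blast
  then show ?thesis unfolding dist_ch by simp
qed

lemma dist_tri:
  assumes "ch x y c1" "ch y z c2"
  shows "xa_dist x z \<le> xa_dist x y + xa_dist y z"
proof -
  have "\<forall>c\<in>{c. ch x y c}. xa_dist x z - xa_dist y z \<le> c"
  proof
    fix c assume "c \<in> {c. ch x y c}"
    then have cx: "ch x y c" by simp
    have "\<forall>e\<in>{e. ch y z e}. xa_dist x z - c \<le> e"
    proof
      fix e assume "e \<in> {e. ch y z e}"
      then have "xa_dist x z \<le> c + e" using dist_le[OF ch_trans[OF cx]] by auto
      then show "xa_dist x z - c \<le> e" by simp
    qed
    then have "xa_dist x z - c \<le> xa_dist y z"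
      unfolding dist_ch[of y z] using assms(2) by (intro cInf_greatest) auto
    then show "xa_dist x z - xa_dist y z \<le> c" by simp
  qed
  then have "xa_dist x z - xa_dist y z \<le> xa_dist x y"
    unfolding dist_ch[of x y] using assms(1) by (intro cInf_greatest) auto
  then show ?thesis by simp
qed

lemma lip_ch:
  assumes "\<And>x y c. xa_step x y c \<Longrightarrow> g x - g y \<le> c"
  shows "ch x y c \<Longrightarrow> g x - g y \<le> c"
  by (induction rule: ch.induct) (use assms in fastforce)+

lemma dist_lower:
  assumes "\<And>x y c. xa_step x y c \<Longrightarrow> g x - g y \<le> c" "ch x y c0"
  shows "g x - g y \<le> xa_dist x y"
  unfolding dist_ch using lip_ch[OF assms(1)] assms(2) by (intro cInf_greatest) auto




lemma reduced_butlast: "reduced L \<Longrightarrow> reduced (butlast L)"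
  unfolding reduced_def by (auto simp: nth_butlast)

lemma reduced_snoc:
  assumes "reduced L" "\<not> (L \<noteq> [] \<and> snd (last L) = False \<and> p = (0, 0))"
  shows "reduced (L @ [(p, True)])"
  unfolding reduced_def
proof (intro allI impI)
  fix i assume i: "Suc i < length (L @ [(p, True)])"
  show "\<not> (fst ((L @ [(p, True)]) ! Suc i) = (0, 0) \<and>
        snd ((L @ [(p, True)]) ! Suc i) \<noteq> snd ((L @ [(p, True)]) ! i))"
  proof (cases "Suc i < length L")
    case True then show ?thesis using assms(1) unfolding reduced_def by (auto simp: nth_append)
  next
    case False
    then have "Suc i = length L" using i by simp
    then have "L \<noteq> []" by auto
    have "L ! i = last L" using \<open>Suc i = length L\<close> \<open>L \<noteq> []\<close> by (metis diff_Suc_1 last_conv_nth)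
    then show ?thesis using assms(2) \<open>Suc i = length L\<close> \<open>L \<noteq> []\<close> by (auto simp: nth_append)
  qed
qed

lemma reduced_target: "reduced L \<Longrightarrow> edge_target L p = FP L' w \<Longrightarrow> reduced L'"
proof -
  assume r: "reduced L" and e: "edge_target L p = FP L' w"
  show ?thesis
  proof (cases "L \<noteq> [] \<and> snd (last L) = False \<and> p = (0, 0)")
    case True
    then have "L' = butlast L" using e unfolding edge_target_def by simp
    then show ?thesis using reduced_butlast[OF r] by simp
  next
    case False
    then have "L' = L @ [(p, True)]" using e unfolding edge_target_def if_not_P[OF False] by simp
    then show ?thesis using reduced_snoc[OF r False] by simp
  qed
qed

lemma target_FP: "\<exists>L' w. edge_target L p = FP L' w"
  unfolding edge_target_def by auto

lemma edge_XA: "reduced L \<Longrightarrow> xa_edge L p \<subseteq> XA"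
proof -
  assume r: "reduced L"
  obtain L' w where t: "edge_target L p = FP L' w" using target_FP by blast
  then have "reduced L'" using reduced_target[OF r] by simp
  then show ?thesis using r t unfolding xa_edge_def XA_def by auto
qed

lemma step_XA: "xa_step x y c \<Longrightarrow> x \<in> XA \<and> y \<in> XA"
  unfolding xa_step_def
proof (elim disjE exE conjE)
  fix L z w assume "reduced L" "x = FP L z" "y = FP L w"
  then show "x \<in> XA \<and> y \<in> XA" by (auto simp: XA_def)
next
  fix L p assume "reduced L" "x \<in> xa_edge L p" "y \<in> xa_edge L p"
  then show "x \<in> XA \<and> y \<in> XA" using edge_XA by blast
qed

lemma lat0: "lat (0, 0) = 0"
  unfolding lat_def by (simp add: complex_eq_iff)

lemma flat_step: "reduced L \<Longrightarrow> xa_step (FP L z) (FP L w) (cmod (z - w))"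
  unfolding xa_step_def by auto

lemma target_ne: "edge_target L p \<noteq> FP L (lat p)"
proof
  assume a: "edge_target L p = FP L (lat p)"
  show False
  proof (cases "L \<noteq> [] \<and> snd (last L) = False \<and> p = (0, 0)")
    case True
    then have "butlast L = L" using a unfolding edge_target_def by simp
    then have "length (butlast L) = length L" by simp
    moreover have "length (butlast L) < length L" using True by (cases L) simp_all
    ultimately show False by simp
  next
    case False
    then have "L @ [(p, True)] = L" using a unfolding edge_target_def if_not_P[OF False] by simp
    then have "length (L @ [(p, True)]) = length L" by simp
    then show False by simp
  qed
qed

lemma epar_E0: "epar L p (FP L (lat p)) = 0" unfolding epar_def by simp
lemma epar_E1: "epar L p (edge_target L p) = 1" using target_ne unfolding epar_def by simp
lemma epar_EP: "epar L p (EP L p t) = t"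
  using target_FP[of L p] unfolding epar_def by auto

lemma edge_step: "reduced L \<Longrightarrow> x \<in> xa_edge L p \<Longrightarrow> y \<in> xa_edge L p \<Longrightarrow>
   xa_step x y \<bar>epar L p x - epar L p y\<bar>"
  unfolding xa_step_def by blast

lemma E0_in: "FP L (lat p) \<in> xa_edge L p" unfolding xa_edge_def by simp
lemma E1_in: "edge_target L p \<in> xa_edge L p" unfolding xa_edge_def by simp
lemma EP_in: "0 < t \<Longrightarrow> t < 1 \<Longrightarrow> EP L p t \<in> xa_edge L p" unfolding xa_edge_def by simp

lemma conn_FP: "reduced L \<Longrightarrow> \<exists>c. ch (FP L z) xa_o c"
proof (induction "length L" arbitrary: L z)
  case 0
  then have "L = []" by simp
  then show ?case using ch_one[OF flat_step[OF \<open>reduced L\<close>, of z 0]] unfolding xa_o_def by auto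
next
  case (Suc n)
  then obtain L' h e where L: "L = L' @ [(h, e)]"
    by (metis length_Suc_conv_rev prod.collapse)
  have rL': "reduced L'" using reduced_butlast[OF Suc.prems] L by simp
  obtain c' where c': "ch (FP L' (lat h)) xa_o c'" using Suc.hyps(1)[OF _ rL'] L Suc.hyps(2) by auto
  have s1: "xa_step (FP L z) (FP L 0) (cmod z)" using flat_step[OF Suc.prems, of z 0] by simp
  have "\<exists>c. xa_step (FP L 0) (FP L' (lat h)) c"
  proof (cases e)
    case True
    have "\<not> (L' \<noteq> [] \<and> snd (last L') = False \<and> h = (0, 0))"
    proof
      assume a: "L' \<noteq> [] \<and> snd (last L') = False \<and> h = (0, 0)"
      define i where "i = length L' - 1"
      have i1: "Suc i < length L" using a L unfolding i_def by simp
      have i2: "L ! Suc i = (h, e)" using a L unfolding i_def by (simp add: nth_append)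
      have i3: "L ! i = last L'" using a L unfolding i_def by (simp add: nth_append last_conv_nth)
      have "\<not> (fst (L ! Suc i) = (0,0) \<and> snd (L ! Suc i) \<noteq> snd (L ! i))"
        using Suc.prems i1 unfolding reduced_def by blast
      then show False using i2 i3 a True by simp
    qed
    then have "edge_target L' h = FP L 0" unfolding edge_target_def using L True by auto
    then show ?thesis using edge_step[OF rL' E1_in E0_in, of h] by (auto simp: step_sym)
  next
    case False
    then have "edge_target L (0,0) = FP L' (lat h)" unfolding edge_target_def using L by simp
    then show ?thesis using edge_step[OF Suc.prems E0_in E1_in, of "(0,0)"] by (auto simp: lat0)
  qed
  then obtain c2 where s2: "xa_step (FP L 0) (FP L' (lat h)) c2" by blast
  show ?case using ch_step[OF s1 ch_step[OF s2 c']] by blast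
qed

lemma conn: "x \<in> XA \<Longrightarrow> \<exists>c. ch x xa_o c"
proof -
  assume "x \<in> XA"
  then consider L z where "x = FP L z" "reduced L" | L p t where "x = EP L p t" "reduced L" "0 < t" "t < 1"
    unfolding XA_def by blast
  then show ?thesis
  proof cases
    case 1 then show ?thesis using conn_FP by blast
  next
    case 2
    then obtain c where "ch (FP L (lat p)) xa_o c" using conn_FP by blast
    moreover have "xa_step x (FP L (lat p)) \<bar>t - 0\<bar>"
      using edge_step[OF 2(2) EP_in[OF 2(3,4)] E0_in, of p] 2 by (simp add: epar_EP epar_E0)
    ultimately show ?thesis using ch_step by blast
  qed
qed

lemma conn2: "x \<in> XA \<Longrightarrow> y \<in> XA \<Longrightarrow> \<exists>c. ch x y c"
proof -
  assume "x \<in> XA" "y \<in> XA"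
  then obtain c1 c2 where "ch x xa_o c1" "ch y xa_o c2" using conn by blast
  then show ?thesis using ch_trans[OF _ ch_sym] by blast
qed

lemma tri: "x \<in> XA \<Longrightarrow> y \<in> XA \<Longrightarrow> z \<in> XA \<Longrightarrow> xa_dist x z \<le> xa_dist x y + xa_dist y z"
proof -
  assume "x \<in> XA" "y \<in> XA" "z \<in> XA"
  then obtain c1 c2 where "ch x y c1" "ch y z c2" using conn2 by meson
  then show ?thesis by (rule dist_tri)
qed

lemma dnonneg: "x \<in> XA \<Longrightarrow> y \<in> XA \<Longrightarrow> 0 \<le> xa_dist x y"
  using conn2 dist_nonneg by meson

lemma lower: "(\<And>x y c. xa_step x y c \<Longrightarrow> x \<in> XA \<Longrightarrow> y \<in> XA \<Longrightarrow> g x - g y \<le> c) \<Longrightarrow>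
   x \<in> XA \<Longrightarrow> y \<in> XA \<Longrightarrow> g x - g y \<le> xa_dist x y"
proof -
  assume h: "\<And>x y c. xa_step x y c \<Longrightarrow> x \<in> XA \<Longrightarrow> y \<in> XA \<Longrightarrow> g x - g y \<le> c"
    "x \<in> XA" "y \<in> XA"
  then obtain c where "ch x y c" using conn2 by meson
  moreover have "\<And>x y c. xa_step x y c \<Longrightarrow> g x - g y \<le> c" using h(1) step_XA by blast
  ultimately show ?thesis using dist_lower by blast
qed




lemma lat_real: "lat (n, 0) = complex_of_real (of_int n)"
  unfolding lat_def by (simp add: complex_eq_iff)

lemma cmod_sub_real: "cmod (w - complex_of_real r) = sqrt ((Re w - r)^2 + (Im w)^2)"
  by (simp add: cmod_def)

locale spine =
  fixes a :: "nat \<Rightarrow> int"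
  assumes a_pos: "\<And>k. 1 \<le> a k"
begin

primrec T :: "nat \<Rightarrow> real" where
  "T 0 = 0" | "T (Suc k) = T k + a k + 1"

fun spd :: "nat \<Rightarrow> word \<Rightarrow> nat" where
  "spd i [] = 0"
| "spd i (x # r) = (if x = ((a i, 0), True) then Suc (spd (Suc i) r) else 0)"

primrec Lwo :: "nat \<Rightarrow> nat \<Rightarrow> word" where
  "Lwo i 0 = []" | "Lwo i (Suc n) = ((a i, 0), True) # Lwo (Suc i) n"

abbreviation "Lw k \<equiv> Lwo 0 k"

definition isspine :: "word \<Rightarrow> bool" where "isspine M \<longleftrightarrow> spd 0 M = length M"

lemma spd_append: "spd i (M @ X) = (if spd i M = length M then length M + spd (i + length M) X else spd i M)"
  by (induction M arbitrary: i) auto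

lemma spd_le: "spd i M \<le> length M"
  by (induction M arbitrary: i) auto

lemma spd_take: "take (spd i M) M = Lwo i (spd i M)"
  by (induction M arbitrary: i) auto

lemma spd_nth: "spd i M < length M \<Longrightarrow> M ! spd i M \<noteq> ((a (i + spd i M), 0), True)"
proof (induction M arbitrary: i)
  case Nil then show ?case by simp
next
  case (Cons x r)
  show ?case
  proof (cases "x = ((a i, 0), True)")
    case True
    then have "spd (Suc i) r < length r" using Cons.prems by simp
    then show ?thesis using Cons.IH[of "Suc i"] True by simp
  next
    case False then show ?thesis by simp
  qed
qed

lemma length_Lwo[simp]: "length (Lwo i n) = n"
  by (induction n arbitrary: i) auto

lemma spd_Lwo[simp]: "spd i (Lwo i n) = n"
  by (induction n arbitrary: i) auto

lemma Lwo_nth: "j < n \<Longrightarrow> Lwo i n ! j = ((a (i + j), 0), True)"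
  by (induction n arbitrary: i j) (auto simp: nth_Cons split: nat.splits)

lemma Lwo_snoc: "Lwo i (Suc n) = Lwo i n @ [((a (i + n), 0), True)]"
  by (induction n arbitrary: i) auto

lemma isspine_Lw[simp]: "isspine (Lw k)"
  unfolding isspine_def by simp

lemma isspine_eq: "isspine M \<Longrightarrow> M = Lw (length M)"
  unfolding isspine_def using spd_take[of 0 M] by simp

lemma reduced_Lwo: "reduced (Lwo i n)"
  unfolding reduced_def by (auto simp: Lwo_nth)

lemma Lw_ne_last: "k > 0 \<Longrightarrow> Lw k \<noteq> [] \<and> snd (last (Lw k)) = True"
proof -
  assume "k > 0"
  then obtain n where "k = Suc n" by (cases k) auto
  then show ?thesis unfolding \<open>k = Suc n\<close> Lwo_snoc[of 0 n] by simp
qed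

fun wrd :: "xa_pt \<Rightarrow> word" where "wrd (FP M z) = M" | "wrd (EP M p t) = M"

definition anc :: "xa_pt \<Rightarrow> complex" where
  "anc x = (if isspine (wrd x) then (case x of FP M z \<Rightarrow> z | EP M p t \<Rightarrow> lat p)
            else lat (fst (wrd x ! spd 0 (wrd x))))"

definition spe :: "xa_pt \<Rightarrow> bool" where
  "spe x = (case x of FP M z \<Rightarrow> False | EP M p t \<Rightarrow> isspine M \<and> p = (a (length M), 0))"

definition reg :: "xa_pt \<Rightarrow> nat" where "reg x = spd 0 (wrd x)"

definition Ap :: "xa_pt \<Rightarrow> xa_pt" where "Ap x = FP (Lw (reg x)) (anc x)"

definition epos :: "xa_pt \<Rightarrow> real" where
  "epos x = (case x of EP M p t \<Rightarrow> T (length M) + a (length M) + t | FP M z \<Rightarrow> 0)"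

definition D :: "nat \<Rightarrow> complex \<Rightarrow> real \<Rightarrow> real" where
  "D k w s = (if s < T k then cmod w + (T k - s)
     else if s \<le> T k + a k then cmod (w - complex_of_real (s - T k))
     else cmod (w - complex_of_real (a k)) + (s - T k - a k))"

definition G :: "real \<Rightarrow> xa_pt \<Rightarrow> real" where
  "G s x = (if spe x then \<bar>epos x - s\<bar> else xa_dist x (Ap x) + D (reg x) (anc x) s)"

definition kidx :: "real \<Rightarrow> nat" where "kidx s = (LEAST k. s < T (Suc k))"

definition gam :: "real \<Rightarrow> xa_pt" where
  "gam s = (let k = kidx s in if s \<le> T k + a k then FP (Lw k) (complex_of_real (s - T k))
            else EP (Lw k) (a k, 0) (s - T k - a k))"

lemma T_Suc_gt: "T k + a k < T (Suc k)" by simp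

lemma a_real: "1 \<le> real_of_int (a k)" using a_pos[of k] by simp

lemma T_smono: "k < m \<Longrightarrow> T k < T m"
proof -
  assume "k < m"
  have "\<And>n. T n < T (Suc n)"
  proof -
    fix n
    have "1 \<le> real_of_int (a n)" by (rule a_real)
    then show "T n < T (Suc n)" by simp
  qed
  then show ?thesis using lift_Suc_mono_less[of T k m] \<open>k < m\<close> by blast
qed

lemma T_mono: "k \<le> m \<Longrightarrow> T k \<le> T m"
  using T_smono by (cases "k = m") (auto intro: less_imp_le)

lemma T_ge: "real k \<le> T k"
proof (induction k)
  case (Suc k) then show ?case using a_pos[of k] by simp
qed simp

lemma T_nonneg: "0 \<le> T k" using T_ge[of k] by linarith

lemma kidx_ex: "\<exists>k. s < T (Suc k)"
proof -
  obtain n :: nat where "s < real n" using reals_Archimedean2 by blast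
  then show ?thesis using T_ge[of "Suc n"] by (intro exI[of _ n]) simp
qed

lemma kidx_prop: "0 \<le> s \<Longrightarrow> T (kidx s) \<le> s \<and> s < T (Suc (kidx s))"
proof -
  assume s: "0 \<le> s"
  have 1: "s < T (Suc (kidx s))" unfolding kidx_def using kidx_ex by (rule LeastI_ex)
  have "T (kidx s) \<le> s"
  proof (cases "kidx s")
    case 0 then show ?thesis using s by simp
  next
    case (Suc j)
    then have "\<not> s < T (Suc j)" using not_less_Least[of j "\<lambda>k. s < T (Suc k)"] unfolding kidx_def by simp
    then show ?thesis using Suc by simp
  qed
  then show ?thesis using 1 by simp
qed

lemma kidx_eq: "T k \<le> s \<Longrightarrow> s < T (Suc k) \<Longrightarrow> kidx s = k"
proof -
  assume h: "T k \<le> s" "s < T (Suc k)"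
  then have s: "0 \<le> s" using T_nonneg[of k] by linarith
  have p: "T (kidx s) \<le> s" "s < T (Suc (kidx s))" using kidx_prop[OF s] by auto
  show ?thesis
  proof (rule ccontr)
    assume "kidx s \<noteq> k"
    then consider "kidx s < k" | "k < kidx s" by linarith
    then show False
    proof cases
      case 1 then have "T (Suc (kidx s)) \<le> T k" by (intro T_mono) simp
      then show False using p h by linarith
    next
      case 2 then have "T (Suc k) \<le> T (kidx s)" by (intro T_mono) simp
      then show False using p h by linarith
    qed
  qed
qed

lemma gam_flat: "T k \<le> s \<Longrightarrow> s \<le> T k + a k \<Longrightarrow> gam s = FP (Lw k) (complex_of_real (s - T k))"
  unfolding gam_def using kidx_eq[of k s] T_Suc_gt[of k] by (simp add: Let_def)

lemma gam_edge: "T k + a k < s \<Longrightarrow> s < T (Suc k) \<Longrightarrow> gam s = EP (Lw k) (a k, 0) (s - T k - a k)"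
  unfolding gam_def using kidx_eq[of k s] T_nonneg[of k] a_pos[of k] by (simp add: Let_def)

lemma gam_cases: "0 \<le> s \<Longrightarrow> (\<exists>k. T k \<le> s \<and> s \<le> T k + a k \<and> gam s = FP (Lw k) (complex_of_real (s - T k)))
   \<or> (\<exists>k. T k + a k < s \<and> s < T (Suc k) \<and> gam s = EP (Lw k) (a k, 0) (s - T k - a k))"
proof -
  assume s: "0 \<le> s"
  let ?k = "kidx s"
  have p: "T ?k \<le> s" "s < T (Suc ?k)" using kidx_prop[OF s] by auto
  show ?thesis
  proof (cases "s \<le> T ?k + a ?k")
    case True then show ?thesis using gam_flat p by blast
  next
    case False then show ?thesis using gam_edge p by (meson not_le)
  qed
qed

lemma gam_XA: "0 \<le> s \<Longrightarrow> gam s \<in> XA"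
  using gam_cases[of s] reduced_Lwo by (auto simp: XA_def)

lemma gam0: "gam 0 = xa_o"
  using gam_flat[of 0 0] a_pos[of 0] unfolding xa_o_def by simp

lemma D_lip: "D k w s - D k w' s \<le> cmod (w - w')"
proof -
  have "\<And>v. cmod (w - v) - cmod (w' - v) \<le> cmod (w - w')"
  proof -
    fix v
    have "cmod (w - v) - cmod (w' - v) \<le> cmod ((w - v) - (w' - v))" by (rule norm_triangle_ineq2)
    then show "cmod (w - v) - cmod (w' - v) \<le> cmod (w - w')" by simp
  qed
  moreover have "cmod w - cmod w' \<le> cmod (w - w')" by (rule norm_triangle_ineq2)
  ultimately show ?thesis unfolding D_def by (auto split: if_splits)
qed

lemma cmod_rr[simp]: "cmod (complex_of_real x - complex_of_real y) = \<bar>x - y\<bar>"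
  by (metis norm_of_real of_real_diff)
lemma cmod_ri[simp]: "cmod (complex_of_real x - complex_of_int y) = \<bar>x - real_of_int y\<bar>"
  by (metis cmod_rr of_real_of_int_eq)

lemma D_lt: "s < T k \<Longrightarrow> D k w s = cmod w + (T k - s)"
  unfolding D_def by simp
lemma D_mid: "T k \<le> s \<Longrightarrow> s \<le> T k + a k \<Longrightarrow> D k w s = cmod (w - complex_of_real (s - T k))"
  unfolding D_def by simp
lemma D_gt: "T k + a k < s \<Longrightarrow> D k w s = cmod (w - complex_of_int (a k)) + (s - T k - a k)"
  unfolding D_def using a_real[of k] by auto

lemma D_on: "T k \<le> s0 \<Longrightarrow> s0 \<le> T k + a k \<Longrightarrow> D k (complex_of_real (s0 - T k)) s = \<bar>s0 - s\<bar>"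
proof -
  assume h: "T k \<le> s0" "s0 \<le> T k + a k"
  consider "s < T k" | "T k \<le> s \<and> s \<le> T k + a k" | "T k + a k < s" by linarith
  then show ?thesis
  proof cases
    case 1 then show ?thesis using h by (simp add: D_lt)
  next
    case 2 then show ?thesis using h by (simp add: D_mid del: of_real_diff)
  next
    case 3
    have e1: "D k (complex_of_real (s0 - T k)) s = cmod (complex_of_real (s0 - T k) - complex_of_int (a k)) + (s - T k - a k)"
      by (rule D_gt[OF 3])
    have e2: "cmod (complex_of_real (s0 - T k) - complex_of_int (a k)) = \<bar>s0 - T k - a k\<bar>" by (rule cmod_ri)
    show ?thesis using e1 e2 h 3 by linarith
  qed
qed

lemma D_nonneg: "0 \<le> D k w s"
  unfolding D_def by auto

lemma D_ge_T: "T k \<le> D k w 0"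
proof (cases "0 < T k")
  case True then show ?thesis by (simp add: D_lt)
next
  case False then show ?thesis using T_nonneg[of k] D_nonneg[of k w 0] by linarith
qed

definition cl :: "nat \<Rightarrow> complex \<Rightarrow> real" where "cl k w = max 0 (min (real_of_int (a k)) (Re w))"
definition rho :: "nat \<Rightarrow> complex \<Rightarrow> real" where "rho k w = cmod (w - complex_of_real (cl k w))"

lemma cl_range: "0 \<le> cl k w \<and> cl k w \<le> a k"
  unfolding cl_def using a_pos[of k] by auto

lemma seg_min: fixes r :: real shows "0 \<le> r \<Longrightarrow> r \<le> a k \<Longrightarrow> rho k w \<le> cmod (w - complex_of_real r) \<and>
    (cmod (w - complex_of_real r) = rho k w \<longrightarrow> r = cl k w)"
proof -
  assume r: "0 \<le> r" "r \<le> a k"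
  have ab: "\<bar>Re w - cl k w\<bar> \<le> \<bar>Re w - r\<bar> \<and> (\<bar>Re w - cl k w\<bar> = \<bar>Re w - r\<bar> \<longrightarrow> r = cl k w)"
  proof -
    consider "Re w < 0" | "0 \<le> Re w \<and> Re w \<le> a k" | "a k < Re w" by linarith
    then show ?thesis
    proof cases
      case 1 then have "cl k w = 0" unfolding cl_def using r by simp
      then show ?thesis using 1 r by (simp add: abs_if)
    next
      case 2 then have "cl k w = Re w" unfolding cl_def by simp
      then show ?thesis by simp
    next
      case 3 then have "cl k w = a k" unfolding cl_def using r by simp
      then show ?thesis using 3 r by (simp add: abs_if)
    qed
  qed
  have sq: "(Re w - cl k w)^2 \<le> (Re w - r)^2" using ab abs_le_square_iff by blast
  have 1: "rho k w \<le> cmod (w - complex_of_real r)"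
    unfolding rho_def cmod_sub_real using sq by (intro real_sqrt_le_mono) simp
  have 2: "cmod (w - complex_of_real r) = rho k w \<longrightarrow> r = cl k w"
  proof
    assume "cmod (w - complex_of_real r) = rho k w"
    then have "(Re w - r)^2 = (Re w - cl k w)^2"
      unfolding rho_def cmod_sub_real by (simp add: real_sqrt_eq_iff)
    then have "\<bar>Re w - r\<bar> = \<bar>Re w - cl k w\<bar>" by (metis real_sqrt_abs)
    then show "r = cl k w" using ab by simp
  qed
  show ?thesis using 1 2 by blast
qed

lemma D_min: "0 \<le> s \<Longrightarrow> rho k w \<le> D k w s \<and> (D k w s = rho k w \<longrightarrow> s = T k + cl k w)"
proof -
  assume s: "0 \<le> s"
  have a0: "0 \<le> real_of_int (a k)" using a_real[of k] by simp
  consider "s < T k" | "T k \<le> s \<and> s \<le> T k + a k" | "T k + a k < s" by linarith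
  then show ?thesis
  proof cases
    case 1
    have "rho k w \<le> cmod (w - complex_of_real 0)" using seg_min[of 0 k w] a0 by simp
    then have "rho k w < D k w s" using 1 by (simp add: D_lt)
    then show ?thesis by simp
  next
    case 2
    then show ?thesis using seg_min[of "s - T k" k w] by (simp add: D_mid del: of_real_diff)
  next
    case 3
    have "rho k w \<le> cmod (w - complex_of_int (a k))" using seg_min[of "real_of_int (a k)" k w] a0 by simp
    then have "rho k w < D k w s" using 3 by (simp add: D_gt)
    then show ?thesis by simp
  qed
qed

lemma D_at: "D k w (T k + cl k w) = rho k w"
  using cl_range[of k w] unfolding rho_def by (simp add: D_mid)

end



context spine begin

lemma reg_FP[simp]: "reg (FP M z) = spd 0 M" unfolding reg_def by simp
lemma reg_EP[simp]: "reg (EP M p t) = spd 0 M" unfolding reg_def by simp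
lemma spe_FP[simp]: "spe (FP M z) = False" unfolding spe_def by simp
lemma spe_EP[simp]: "spe (EP M p t) = (isspine M \<and> p = (a (length M), 0))" unfolding spe_def by simp
lemma anc_FP[simp]: "anc (FP M z) = (if isspine M then z else lat (fst (M ! spd 0 M)))"
  unfolding anc_def by simp
lemma anc_EP[simp]: "anc (EP M p t) = (if isspine M then lat p else lat (fst (M ! spd 0 M)))"
  unfolding anc_def by simp

lemma Lw_Suc: "Lw (Suc k) = Lw k @ [((a k, 0), True)]"
  using Lwo_snoc[of 0 k] by simp

lemma target_spine: "edge_target (Lw k) p = FP (Lw k @ [(p, True)]) 0"
proof (cases "k = 0")
  case True then show ?thesis unfolding edge_target_def by simp
next
  case False then show ?thesis using Lw_ne_last[of k] unfolding edge_target_def by simp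
qed

lemma nonspine_lt: "\<not> isspine L \<Longrightarrow> spd 0 L < length L"
  using spd_le[of 0 L] unfolding isspine_def by simp

lemma spine_last: "isspine L \<Longrightarrow> L \<noteq> [] \<Longrightarrow> snd (last L) = True"
  using isspine_eq[of L] Lw_ne_last[of "length L"] by (metis length_greater_0_conv)

lemma spd_snoc_spine: "spd 0 (Lw k @ [(p, True)]) = (if p = (a k, 0) then Suc k else k)"
  using spd_append[of 0 "Lw k" "[(p, True)]"] by simp

lemma spd_butlast:
  assumes "L \<noteq> []" "snd (last L) = False"
  shows "spd 0 (butlast L) = spd 0 L"
proof -
  have L: "L = butlast L @ [last L]" using assms by simp
  have 0: "spd j [last L] = 0" for j using assms(2) by (cases "last L") auto
  have "spd 0 L = spd 0 (butlast L @ [last L])" using L by metis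
  also have "\<dots> = spd 0 (butlast L)" unfolding spd_append using 0 by simp
  finally show ?thesis by simp
qed

lemma nonspine_append: "\<not> isspine L \<Longrightarrow> spd 0 (L @ X) = spd 0 L \<and> \<not> isspine (L @ X) \<and>
    (L @ X) ! spd 0 L = L ! spd 0 L"
  using nonspine_lt[of L] spd_append[of 0 L X] unfolding isspine_def by (auto simp: nth_append)

definition om :: "word \<Rightarrow> int \<times> int \<Rightarrow> complex" where
  "om L p = (if isspine L then lat p else lat (fst (L ! spd 0 L)))"

lemma edge_mem: "u \<in> xa_edge L p \<Longrightarrow> u = FP L (lat p) \<or> u = edge_target L p \<or> (\<exists>t. u = EP L p t \<and> 0 < t \<and> t < 1)"
  unfolding xa_edge_def by auto

lemma edge_other:
  assumes "\<not> (isspine L \<and> p = (a (length L), 0))" "u \<in> xa_edge L p"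
  shows "\<not> spe u \<and> reg u = spd 0 L \<and> anc u = om L p"
proof -
  consider "u = FP L (lat p)" | "u = edge_target L p" | t where "u = EP L p t"
    using edge_mem[OF assms(2)] by blast
  then show ?thesis
  proof cases
    case 1 then show ?thesis unfolding om_def by simp
  next
    case 3 then show ?thesis using assms(1) unfolding om_def by simp
  next
    case 2
    show ?thesis
    proof (cases "L \<noteq> [] \<and> snd (last L) = False \<and> p = (0, 0)")
      case True
      then have u: "u = FP (butlast L) (lat (fst (last L)))" using 2 unfolding edge_target_def by simp
      have ns: "\<not> isspine L" using True spine_last by auto
      have sb: "spd 0 (butlast L) = spd 0 L" using True spd_butlast by simp
      have lt: "spd 0 L < length L" using nonspine_lt[OF ns] .
      show ?thesis
      proof (cases "spd 0 L = length L - 1")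
        case True
        then have "isspine (butlast L)" unfolding isspine_def using sb by simp
        moreover have "L ! spd 0 L = last L" using True \<open>L \<noteq> [] \<and> _\<close> by (simp add: last_conv_nth)
        ultimately show ?thesis using u ns sb unfolding om_def by simp
      next
        case False
        then have "\<not> isspine (butlast L)" unfolding isspine_def using sb lt by simp
        moreover have "butlast L ! spd 0 L = L ! spd 0 L" using False lt by (simp add: nth_butlast)
        ultimately show ?thesis using u ns sb unfolding om_def by simp
      qed
    next
      case False
      then have u: "u = FP (L @ [(p, True)]) 0" using 2 unfolding edge_target_def if_not_P[OF False] by simp
      show ?thesis
      proof (cases "isspine L")
        case True
        then have L: "L = Lw (length L)" by (rule isspine_eq)
        have pn: "p \<noteq> (a (length L), 0)" using assms(1) True by simp
        have sp: "spd 0 (L @ [(p, True)]) = length L" using spd_snoc_spine[of "length L" p] pn L by simp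
        then have "\<not> isspine (L @ [(p, True)])" unfolding isspine_def by simp
        moreover have "spd 0 L = length L" using True unfolding isspine_def .
        ultimately show ?thesis using u sp True unfolding om_def by (simp add: nth_append)
      next
        case False
        then show ?thesis using u nonspine_append[OF False, of "[(p, True)]"] unfolding om_def by simp
      qed
    qed
  qed
qed

lemma edge_spine:
  assumes "u \<in> xa_edge (Lw k) (a k, 0)"
  shows "(u = FP (Lw k) (of_int (a k)) \<and> epar (Lw k) (a k, 0) u = 0) \<or>
         (u = FP (Lw (Suc k)) 0 \<and> epar (Lw k) (a k, 0) u = 1) \<or>
         (\<exists>t. u = EP (Lw k) (a k, 0) t \<and> 0 < t \<and> t < 1 \<and> epar (Lw k) (a k, 0) u = t)"
proof -
  have tg: "edge_target (Lw k) (a k, 0) = FP (Lw (Suc k)) 0" using target_spine[of k] Lw_Suc by simp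
  have l: "lat (a k, 0) = of_int (a k)" using lat_real by simp
  show ?thesis using edge_mem[OF assms] epar_E0[of "Lw k" "(a k, 0)"] epar_E1[of "Lw k" "(a k, 0)"]
      epar_EP[of "Lw k" "(a k, 0)"] tg l by metis
qed

lemma step_cases:
  assumes "xa_step x y c"
  shows "(\<exists>L z w. reduced L \<and> x = FP L z \<and> y = FP L w \<and> c = cmod (z - w)) \<or>
    (\<exists>k. x \<in> xa_edge (Lw k) (a k, 0) \<and> y \<in> xa_edge (Lw k) (a k, 0) \<and>
         c = \<bar>epar (Lw k) (a k, 0) x - epar (Lw k) (a k, 0) y\<bar>) \<or>
    (\<exists>L p. reduced L \<and> \<not> (isspine L \<and> p = (a (length L), 0)) \<and> x \<in> xa_edge L p \<and> y \<in> xa_edge L p \<and>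
         c = \<bar>epar L p x - epar L p y\<bar>)"
  using assms unfolding xa_step_def by (metis isspine_eq)

end



context spine begin

lemma Ap_XA: "Ap x \<in> XA"
  unfolding Ap_def XA_def using reduced_Lwo by auto

lemma Lw_XA: "FP (Lw k) z \<in> XA"
  unfolding XA_def using reduced_Lwo by auto

lemma G_flat: "G s (FP (Lw k) z) = D k z s"
  unfolding G_def Ap_def by (simp add: dist_refl)

lemma G_same:
  assumes "\<not> spe x" "\<not> spe y" "reg x = reg y" "anc x = anc y" "xa_step x y c"
  shows "G s x - G s y \<le> c"
proof -
  have xy: "x \<in> XA" "y \<in> XA" using step_XA[OF assms(5)] by auto
  have "xa_dist x (Ap x) \<le> xa_dist x y + xa_dist y (Ap x)" using tri[OF xy Ap_XA] .
  moreover have "xa_dist x y \<le> c" using dist_step[OF assms(5)] .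
  moreover have "Ap y = Ap x" unfolding Ap_def using assms(3,4) by simp
  ultimately show ?thesis unfolding G_def using assms(1-4) by simp
qed

lemma G_spedge:
  assumes "u \<in> xa_edge (Lw k) (a k, 0)"
  shows "G s u = \<bar>T k + a k + epar (Lw k) (a k, 0) u - s\<bar>"
proof -
  consider "u = FP (Lw k) (of_int (a k))" "epar (Lw k) (a k, 0) u = 0"
    | "u = FP (Lw (Suc k)) 0" "epar (Lw k) (a k, 0) u = 1"
    | t where "u = EP (Lw k) (a k, 0) t" "epar (Lw k) (a k, 0) u = t"
    using edge_spine[OF assms] by blast
  then show ?thesis
  proof cases
    case 1
    have "of_int (a k) = complex_of_real (T k + a k - T k)" by simp
    then have "G s u = D k (complex_of_real (T k + a k - T k)) s" using 1 G_flat by metis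
    also have "\<dots> = \<bar>T k + a k - s\<bar>" by (rule D_on) (use a_real[of k] in auto)
    finally show ?thesis using 1 by simp
  next
    case 2
    have "(0::complex) = complex_of_real (T (Suc k) - T (Suc k))" by simp
    then have "G s u = D (Suc k) (complex_of_real (T (Suc k) - T (Suc k))) s" using 2 G_flat by metis
    also have "\<dots> = \<bar>T (Suc k) - s\<bar>" by (rule D_on) (use a_real[of "Suc k"] in auto)
    finally show ?thesis using 2 by simp
  next
    case 3
    then show ?thesis unfolding G_def epos_def by simp
  qed
qed

lemma G_lip:
  assumes "xa_step x y c"
  shows "G s x - G s y \<le> c"
proof -
  consider (F) L z w where "reduced L" "x = FP L z" "y = FP L w" "c = cmod (z - w)"
    | (S) k where "x \<in> xa_edge (Lw k) (a k, 0)" "y \<in> xa_edge (Lw k) (a k, 0)"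
         "c = \<bar>epar (Lw k) (a k, 0) x - epar (Lw k) (a k, 0) y\<bar>"
    | (O) L p where "\<not> (isspine L \<and> p = (a (length L), 0))" "x \<in> xa_edge L p" "y \<in> xa_edge L p"
    using step_cases[OF assms] by blast
  then show ?thesis
  proof cases
    case F
    show ?thesis
    proof (cases "isspine L")
      case True
      then have L: "L = Lw (length L)" by (rule isspine_eq)
      then have "G s x - G s y = D (length L) z s - D (length L) w s" using F G_flat by metis
      then show ?thesis using D_lip F by simp
    next
      case False
      then show ?thesis using G_same[OF _ _ _ _ assms] F by simp
    qed
  next
    case S
    then show ?thesis using G_spedge[OF S(1), of s] G_spedge[OF S(2), of s] by linarith
  next
    case O
    then show ?thesis using edge_other[OF O(1,2)] edge_other[OF O(1,3)] G_same[OF _ _ _ _ assms] by simp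
  qed
qed

lemma G_gam: "0 \<le> s \<Longrightarrow> G s (gam s) = 0"
proof -
  assume "0 \<le> s"
  then consider k where "T k \<le> s" "s \<le> T k + a k" "gam s = FP (Lw k) (complex_of_real (s - T k))"
    | k where "T k + a k < s" "s < T (Suc k)" "gam s = EP (Lw k) (a k, 0) (s - T k - a k)"
    using gam_cases by blast
  then show ?thesis
  proof cases
    case 1 then show ?thesis using G_flat D_on by simp
  next
    case 2 then show ?thesis unfolding G_def epos_def by simp
  qed
qed

lemma G_low: "x \<in> XA \<Longrightarrow> 0 \<le> s \<Longrightarrow> G s x \<le> xa_dist x (gam s)"
  using lower[of "G s" x "gam s"] G_lip gam_XA G_gam by fastforce

lemma gam_fl: "T k \<le> s \<Longrightarrow> s \<le> T k + a k \<Longrightarrow> gam s = FP (Lw k) (complex_of_real (s - T k))"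
  by (rule gam_flat)

lemma gam_on_edge:
  assumes "T k + a k \<le> s" "s \<le> T (Suc k)"
  shows "gam s \<in> xa_edge (Lw k) (a k, 0) \<and> epar (Lw k) (a k, 0) (gam s) = s - T k - a k"
proof -
  have tg: "edge_target (Lw k) (a k, 0) = FP (Lw (Suc k)) 0" using target_spine[of k] Lw_Suc by simp
  consider "s = T k + a k" | "s = T (Suc k)" | "T k + a k < s" "s < T (Suc k)" using assms by linarith
  then show ?thesis
  proof cases
    case 1
    then have "gam s = FP (Lw k) (lat (a k, 0))" using gam_flat[of k s] T_nonneg[of k] a_pos[of k] by (simp add: lat_real)
    then show ?thesis using 1 E0_in epar_E0 by simp
  next
    case 2
    then have "gam s = FP (Lw (Suc k)) 0" using gam_flat[of "Suc k" s] a_real[of "Suc k"] by simp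
    then have "gam s = edge_target (Lw k) (a k, 0)" using tg by simp
    then show ?thesis using 2 E1_in epar_E1 by simp
  next
    case 3
    then have "gam s = EP (Lw k) (a k, 0) (s - T k - a k)" using gam_edge by simp
    moreover have "0 < s - T k - a k" "s - T k - a k < 1" using 3 by auto
    ultimately show ?thesis using EP_in epar_EP by simp
  qed
qed

lemma block:
  assumes "T k \<le> s1" "s1 \<le> s2" "s2 \<le> T (Suc k)"
  shows "ch (gam s1) (gam s2) (s2 - s1)"
proof -
  have rL: "reduced (Lw k)" by (rule reduced_Lwo)
  have edge: "ch (gam u) (gam v) (v - u)" if "T k + a k \<le> u" "u \<le> v" "v \<le> T (Suc k)" for u v
  proof -
    have "xa_step (gam u) (gam v) \<bar>(u - T k - a k) - (v - T k - a k)\<bar>"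
      using edge_step[OF rL] gam_on_edge[of k u] gam_on_edge[of k v] that by fastforce
    then show ?thesis using ch_one that by fastforce
  qed
  have flat: "ch (gam u) (gam v) (v - u)" if "T k \<le> u" "u \<le> v" "v \<le> T k + a k" for u v
  proof -
    have "xa_step (FP (Lw k) (complex_of_real (u - T k))) (FP (Lw k) (complex_of_real (v - T k)))
        (cmod (complex_of_real (u - T k) - complex_of_real (v - T k)))" by (rule flat_step[OF rL])
    then have "xa_step (gam u) (gam v) \<bar>(u - T k) - (v - T k)\<bar>"
      using gam_fl[of k u] gam_fl[of k v] that by (simp del: of_real_diff)
    then show ?thesis using ch_one that by fastforce
  qed
  consider "s2 \<le> T k + a k" | "T k + a k \<le> s1" | "s1 < T k + a k" "T k + a k < s2" by linarith
  then show ?thesis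
  proof cases
    case 1 then show ?thesis using flat assms by simp
  next
    case 2 then show ?thesis using edge assms by simp
  next
    case 3
    have "ch (gam s1) (gam (T k + a k)) (T k + a k - s1)" using flat 3 assms by simp
    moreover have "ch (gam (T k + a k)) (gam s2) (s2 - (T k + a k))" using edge 3 assms by simp
    ultimately show ?thesis using ch_trans by fastforce
  qed
qed

lemma blocks: "T k \<le> s1 \<Longrightarrow> s1 \<le> s2 \<Longrightarrow> s2 \<le> T (k + n) \<Longrightarrow> ch (gam s1) (gam s2) (s2 - s1)"
proof (induction n arbitrary: s1 s2)
  case 0
  then have "s1 = s2" by simp
  then show ?case using ch_refl by simp
next
  case (Suc n)
  show ?case
  proof (cases "s2 \<le> T (k + n)")
    case True then show ?thesis using Suc by blast
  next
    case False
    show ?thesis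
    proof (cases "s1 \<le> T (k + n)")
      case True
      have "ch (gam s1) (gam (T (k + n))) (T (k + n) - s1)" using Suc.IH Suc.prems True by simp
      moreover have "ch (gam (T (k + n))) (gam s2) (s2 - T (k + n))"
        using block[of "k + n" "T (k + n)" s2] False Suc.prems by simp
      ultimately show ?thesis using ch_trans by fastforce
    next
      case F2: False
      then show ?thesis using block[of "k + n" s1 s2] Suc.prems by simp
    qed
  qed
qed

lemma spine_chain: "0 \<le> s1 \<Longrightarrow> s1 \<le> s2 \<Longrightarrow> ch (gam s1) (gam s2) (s2 - s1)"
proof -
  assume h: "0 \<le> s1" "s1 \<le> s2"
  obtain n :: nat where "s2 < real n" using reals_Archimedean2 by blast
  then have "s2 \<le> T (0 + n)" using T_ge[of n] by simp
  then show ?thesis using blocks[of 0 s1 s2 n] h by simp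
qed

lemma gam_dist_le: "0 \<le> s1 \<Longrightarrow> 0 \<le> s2 \<Longrightarrow> xa_dist (gam s1) (gam s2) \<le> \<bar>s1 - s2\<bar>"
proof (cases "s1 \<le> s2")
  case True
  assume "0 \<le> s1" "0 \<le> s2"
  then show ?thesis using dist_le[OF spine_chain[of s1 s2]] True by simp
next
  case False
  assume "0 \<le> s1" "0 \<le> s2"
  then show ?thesis using dist_le[OF ch_sym[OF spine_chain[of s2 s1]]] False by simp
qed

lemma flat_to_gam: "0 \<le> s \<Longrightarrow> ch (FP (Lw k) w) (gam s) (D k w s)"
proof -
  assume s: "0 \<le> s"
  have rL: "reduced (Lw k)" by (rule reduced_Lwo)
  consider "s < T k" | "T k \<le> s" "s \<le> T k + a k" | "T k + a k < s" by linarith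
  then show ?thesis
  proof cases
    case 1
    have g: "gam (T k) = FP (Lw k) 0" using gam_flat[of k "T k"] a_real[of k] by simp
    have "ch (FP (Lw k) w) (FP (Lw k) 0) (cmod (w - 0))" by (rule ch_one[OF flat_step[OF rL]])
    moreover have "ch (gam (T k)) (gam s) (T k - s)" using ch_sym[OF spine_chain[of s "T k"]] s 1 by simp
    ultimately have "ch (FP (Lw k) w) (gam s) (cmod w + (T k - s))" using ch_trans g by fastforce
    then show ?thesis using 1 D_lt by simp
  next
    case 2
    have "ch (FP (Lw k) w) (FP (Lw k) (complex_of_real (s - T k))) (cmod (w - complex_of_real (s - T k)))"
      by (rule ch_one[OF flat_step[OF rL]])
    then show ?thesis using 2 gam_fl[of k s] D_mid[of k s w] by (simp del: of_real_diff)
  next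
    case 3
    have g: "gam (T k + a k) = FP (Lw k) (of_int (a k))" using gam_flat[of k "T k + a k"] a_real[of k] by simp
    have "ch (FP (Lw k) w) (FP (Lw k) (of_int (a k))) (cmod (w - of_int (a k)))" by (rule ch_one[OF flat_step[OF rL]])
    moreover have "ch (gam (T k + a k)) (gam s) (s - (T k + a k))"
      using spine_chain[of "T k + a k" s] 3 T_nonneg[of k] a_real[of k] by simp
    ultimately have cf: "ch (FP (Lw k) w) (gam s) (cmod (w - of_int (a k)) + (s - (T k + a k)))"
      using ch_trans g by fastforce
    have e: "D k w s = cmod (w - of_int (a k)) + (s - (T k + a k))" using D_gt[OF 3] by simp
    show ?thesis unfolding e by (rule cf)
  qed
qed

lemma G_up: "x \<in> XA \<Longrightarrow> 0 \<le> s \<Longrightarrow> xa_dist x (gam s) \<le> G s x"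
proof -
  assume x: "x \<in> XA" and s: "0 \<le> s"
  show ?thesis
  proof (cases "spe x")
    case True
    then obtain M p t where xe: "x = EP M p t" "isspine M" "p = (a (length M), 0)"
      unfolding spe_def by (cases x) auto
    then have t: "0 < t" "t < 1" using x unfolding XA_def by auto
    obtain k where M: "M = Lw k" using isspine_eq[OF xe(2)] by blast
    have xk: "x = EP (Lw k) (a k, 0) t" using xe M by simp
    have "x = gam (T k + a k + t)" using gam_edge[of k "T k + a k + t"] t xk by simp
    moreover have "epos x = T k + a k + t" using xk unfolding epos_def by simp
    moreover have "0 \<le> T k + a k + t" using T_nonneg[of k] a_real[of k] t by simp
    ultimately show ?thesis unfolding G_def using True gam_dist_le s by simp
  next
    case False
    have "xa_dist x (gam s) \<le> xa_dist x (Ap x) + xa_dist (Ap x) (gam s)"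
      using tri[OF x Ap_XA gam_XA[OF s]] .
    moreover have "xa_dist (Ap x) (gam s) \<le> D (reg x) (anc x) s"
      unfolding Ap_def using dist_le[OF flat_to_gam[OF s]] .
    ultimately show ?thesis unfolding G_def using False by simp
  qed
qed

lemma dist_gam: "x \<in> XA \<Longrightarrow> 0 \<le> s \<Longrightarrow> xa_dist x (gam s) = G s x"
  using G_up G_low by (meson order.antisym)

end



context spine begin

declare Lwo.simps(2)[simp del]

definition sig :: "xa_pt \<Rightarrow> real" where
  "sig x = (if spe x then epos x else T (reg x) + cl (reg x) (anc x))"

definition psi :: "xa_pt \<Rightarrow> real" where
  "psi x = (if spe x then 0 else xa_dist x (Ap x) + rho (reg x) (anc x))"

definition Z :: "xa_pt set" where "Z = gam ` {0..}"

lemma spe_gam: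
  assumes "x \<in> XA" "spe x"
  shows "x = gam (epos x) \<and> 0 \<le> epos x"
proof -
  obtain M p t where xe: "x = EP M p t" "isspine M" "p = (a (length M), 0)"
    using assms(2) unfolding spe_def by (cases x) auto
  then have t: "0 < t" "t < 1" using assms(1) unfolding XA_def by auto
  obtain k where M: "M = Lw k" using isspine_eq[OF xe(2)] by blast
  have xk: "x = EP (Lw k) (a k, 0) t" using xe M by simp
  have "x = gam (T k + a k + t)" using gam_edge[of k "T k + a k + t"] t xk by simp
  moreover have "epos x = T k + a k + t" using xk unfolding epos_def by simp
  moreover have "0 \<le> T k + a k + t" using T_nonneg[of k] a_real[of k] t by simp
  ultimately show ?thesis by simp
qed

lemma G_min:
  assumes "x \<in> XA" "0 \<le> s"
  shows "psi x \<le> G s x \<and> (G s x = psi x \<longrightarrow> s = sig x)"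
proof (cases "spe x")
  case True then show ?thesis unfolding psi_def G_def sig_def by auto
next
  case False then show ?thesis unfolding psi_def G_def sig_def using D_min[OF assms(2)] by auto
qed

lemma sig_nonneg: "x \<in> XA \<Longrightarrow> 0 \<le> sig x"
proof (cases "spe x")
  case True
  assume "x \<in> XA"
  then show ?thesis using spe_gam[OF _ True] unfolding sig_def using True by simp
next
  case False
  have "0 \<le> T (reg x)" "0 \<le> cl (reg x) (anc x)" using T_nonneg cl_range by auto
  then show ?thesis unfolding sig_def using False by simp
qed

lemma G_sig: "G (sig x) x = psi x"
  unfolding G_def psi_def sig_def using D_at by simp

lemma d_gam_ge: "x \<in> XA \<Longrightarrow> 0 \<le> s \<Longrightarrow> psi x \<le> xa_dist x (gam s)"
  using G_min dist_gam by simp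

lemma d_gam_eq: "x \<in> XA \<Longrightarrow> 0 \<le> s \<Longrightarrow> xa_dist x (gam s) \<le> psi x \<Longrightarrow> s = sig x"
proof -
  assume h: "x \<in> XA" "0 \<le> s" "xa_dist x (gam s) \<le> psi x"
  have "psi x \<le> G s x" "G s x = psi x \<longrightarrow> s = sig x" using G_min[OF h(1,2)] by auto
  moreover have "xa_dist x (gam s) = G s x" using dist_gam[OF h(1,2)] .
  ultimately show ?thesis using h(3) by linarith
qed

lemma d_gam_sig: "x \<in> XA \<Longrightarrow> xa_dist x (gam (sig x)) = psi x"
  using dist_gam sig_nonneg G_sig by simp

lemma psi_nonneg: "x \<in> XA \<Longrightarrow> 0 \<le> psi x"
proof -
  assume x: "x \<in> XA"
  have "0 \<le> xa_dist x (gam (sig x))" using dnonneg[OF x gam_XA[OF sig_nonneg[OF x]]] .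
  then show ?thesis using d_gam_sig[OF x] by simp
qed

lemma setdist_Z: "x \<in> XA \<Longrightarrow> setdist_d xa_dist x Z = psi x"
  unfolding setdist_d_def Z_def
proof -
  assume x: "x \<in> XA"
  have "(\<lambda>z. xa_dist x z) ` gam ` {0..} = (\<lambda>s. xa_dist x (gam s)) ` {0..}" by (simp add: image_image)
  moreover have "Inf ((\<lambda>s. xa_dist x (gam s)) ` {0..}) = psi x"
  proof (rule cInf_eq_minimum)
    show "psi x \<in> (\<lambda>s. xa_dist x (gam s)) ` {0..}"
    proof (rule image_eqI[of _ _ "sig x"])
      show "psi x = xa_dist x (gam (sig x))" using d_gam_sig[OF x] by simp
      show "sig x \<in> {0..}" using sig_nonneg[OF x] by simp
    qed
  next
    fix v assume "v \<in> (\<lambda>s. xa_dist x (gam s)) ` {0..}"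
    then show "psi x \<le> v" using d_gam_ge[OF x] by auto
  qed
  ultimately show "Inf ((\<lambda>z. xa_dist x z) ` gam ` {0..}) = psi x" by simp
qed

lemma proj_Z: "x \<in> XA \<Longrightarrow> proj_d xa_dist x Z = {gam (sig x)}"
proof -
  assume x: "x \<in> XA"
  have "gam (sig x) \<in> Z" unfolding Z_def using sig_nonneg[OF x] by simp
  moreover have "z = gam (sig x)" if "z \<in> Z" "xa_dist x z = psi x" for z
  proof -
    have "z \<in> gam ` {0..}" using that(1) Z_def by simp
    then obtain s where s: "0 \<le> s" "z = gam s" by auto
    then have "s = sig x" using d_gam_eq[OF x] that(2) by simp
    then show ?thesis using s by simp
  qed
  moreover have "xa_dist x (gam (sig x)) = psi x" using d_gam_sig[OF x] .
  ultimately have "{z \<in> Z. xa_dist x z = psi x} = {gam (sig x)}" by blast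
  then show ?thesis unfolding proj_d_def setdist_Z[OF x] .
qed

lemma psi_lip: "x \<in> XA \<Longrightarrow> y \<in> XA \<Longrightarrow> psi x \<le> xa_dist x y + psi y"
proof -
  assume x: "x \<in> XA" and y: "y \<in> XA"
  have "psi x \<le> xa_dist x (gam (sig y))" using d_gam_ge[OF x sig_nonneg[OF y]] .
  also have "\<dots> \<le> xa_dist x y + xa_dist y (gam (sig y))" using tri[OF x y gam_XA[OF sig_nonneg[OF y]]] .
  finally show ?thesis using d_gam_sig[OF y] by simp
qed

lemma psi_gam: "0 \<le> s \<Longrightarrow> psi (gam s) = 0"
  using d_gam_ge[OF gam_XA, of s s] psi_nonneg[OF gam_XA, of s] dist_refl by simp

lemma G_gam2: "0 \<le> u \<Longrightarrow> G s (gam u) = \<bar>u - s\<bar>"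
proof -
  assume "0 \<le> u"
  then consider k where "T k \<le> u" "u \<le> T k + a k" "gam u = FP (Lw k) (complex_of_real (u - T k))"
    | k where "T k + a k < u" "u < T (Suc k)" "gam u = EP (Lw k) (a k, 0) (u - T k - a k)"
    using gam_cases by blast
  then show ?thesis
  proof cases
    case 1 then show ?thesis using G_flat D_on by simp
  next
    case 2 then show ?thesis unfolding G_def epos_def by simp
  qed
qed

lemma gam_dist: "0 \<le> u \<Longrightarrow> 0 \<le> s \<Longrightarrow> xa_dist (gam u) (gam s) = \<bar>u - s\<bar>"
  using dist_gam[OF gam_XA] G_gam2 by simp

lemma diam_two: "0 \<le> u \<Longrightarrow> 0 \<le> v \<Longrightarrow> diam_d xa_dist {gam u, gam v} = \<bar>u - v\<bar>"
proof -
  assume u: "0 \<le> u" and v: "0 \<le> v"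
  have "{xa_dist p q | p q. p \<in> {gam u, gam v} \<and> q \<in> {gam u, gam v}} =
     {xa_dist (gam u) (gam u), xa_dist (gam u) (gam v), xa_dist (gam v) (gam u), xa_dist (gam v) (gam v)}"
    by blast
  also have "\<dots> = {0, \<bar>u - v\<bar>}"
    using gam_dist[OF u v] gam_dist[OF v u] gam_dist[OF u u] gam_dist[OF v v] by (auto simp: abs_minus_commute)
  finally have "{xa_dist p q | p q. p \<in> {gam u, gam v} \<and> q \<in> {gam u, gam v}} = {0, \<bar>u - v\<bar>}" .
  moreover have "Sup {0, \<bar>u - v\<bar>} = \<bar>u - v\<bar>" by (rule cSup_eq_maximum) auto
  ultimately show ?thesis unfolding diam_d_def by simp
qed

definition inr :: "nat \<Rightarrow> xa_pt \<Rightarrow> bool" where "inr k z \<longleftrightarrow> \<not> spe z \<and> reg z = k"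

lemma crossing:
  assumes "xa_step z z' c" "inr k z" "\<not> inr k z'"
  shows "z = gam (T k) \<or> z = gam (T k + a k)"
proof -
  have g1: "gam (T k) = FP (Lw k) 0" using gam_flat[of k "T k"] a_real[of k] by simp
  have g2: "gam (T k + a k) = FP (Lw k) (of_int (a k))" using gam_flat[of k "T k + a k"] a_real[of k] by simp
  consider (F) L w w' where "reduced L" "z = FP L w" "z' = FP L w'"
    | (S) j where "z \<in> xa_edge (Lw j) (a j, 0)" "z' \<in> xa_edge (Lw j) (a j, 0)"
    | (O) L p where "\<not> (isspine L \<and> p = (a (length L), 0))" "z \<in> xa_edge L p" "z' \<in> xa_edge L p"
    using step_cases[OF assms(1)] by blast
  then show ?thesis
  proof cases
    case F then show ?thesis using assms(2,3) unfolding inr_def by simp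
  next
    case O then show ?thesis using assms(2,3) edge_other[OF O(1,2)] edge_other[OF O(1,3)] unfolding inr_def by simp
  next
    case S
    then consider "z = FP (Lw j) (of_int (a j))" | "z = FP (Lw (Suc j)) 0" | t where "z = EP (Lw j) (a j, 0) t"
      using edge_spine by blast
    then show ?thesis
    proof cases
      case 1 then have "j = k" using assms(2) unfolding inr_def by simp
      then show ?thesis using 1 g2 by simp
    next
      case 2 then have "Suc j = k" using assms(2) unfolding inr_def by simp
      then show ?thesis using 2 g1 by simp
    next
      case 3 then show ?thesis using assms(2) unfolding inr_def by simp
    qed
  qed
qed

lemma far_bound:
  assumes x: "x \<in> XA" and y: "y \<in> XA" and "\<not> spe x" "\<not> inr (reg x) y"
  shows "psi x + psi y \<le> xa_dist x y"
proof -
  let ?k = "reg x"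
  define g where "g z = (if inr ?k z then psi z else - psi z)" for z
  have "g u - g v \<le> c" if st: "xa_step u v c" for u v c
  proof -
    have uv: "u \<in> XA" "v \<in> XA" using step_XA[OF st] by auto
    have duv: "xa_dist u v \<le> c" "xa_dist v u \<le> c" using dist_step[OF st] dist_step[OF step_sym[OF st]] by auto
    have l1: "psi u \<le> xa_dist u v + psi v" "psi v \<le> xa_dist v u + psi u" using psi_lip uv by auto
    have p0: "psi u \<ge> 0" "psi v \<ge> 0" using psi_nonneg uv by auto
    consider "inr ?k u = inr ?k v" | "inr ?k u" "\<not> inr ?k v" | "\<not> inr ?k u" "inr ?k v" by blast
    then show ?thesis
    proof cases
      case 1 then show ?thesis unfolding g_def using l1 duv by auto
    next
      case 2
      have nn: "0 \<le> T ?k" "0 \<le> T ?k + a ?k" using T_nonneg[of ?k] a_real[of ?k] by linarith+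
      have "u = gam (T ?k) \<or> u = gam (T ?k + a ?k)" using crossing[OF st 2] .
      then have "psi u = 0" using psi_gam[OF nn(1)] psi_gam[OF nn(2)] by auto
      then show ?thesis unfolding g_def using 2 l1 duv by auto
    next
      case 3
      have nn: "0 \<le> T ?k" "0 \<le> T ?k + a ?k" using T_nonneg[of ?k] a_real[of ?k] by linarith+
      have "v = gam (T ?k) \<or> v = gam (T ?k + a ?k)" using crossing[OF step_sym[OF st] 3(2,1)] .
      then have "psi v = 0" using psi_gam[OF nn(1)] psi_gam[OF nn(2)] by auto
      then show ?thesis unfolding g_def using 3 p0 step_nonneg[OF st] by auto
    qed
  qed
  then have "g x - g y \<le> xa_dist x y" using lower x y by blast
  moreover have "inr ?k x" unfolding inr_def using assms(3) by simp
  ultimately show ?thesis unfolding g_def using assms(4) by simp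
qed

lemma sig_range: "\<not> spe x \<Longrightarrow> T (reg x) \<le> sig x \<and> sig x \<le> T (reg x) + a (reg x)"
  unfolding sig_def using cl_range by auto

lemma norm_ge: "x \<in> XA \<Longrightarrow> \<not> spe x \<Longrightarrow> T (reg x) \<le> xa_dist xa_o x"
proof -
  assume x: "x \<in> XA" "\<not> spe x"
  have "xa_dist xa_o x = G 0 x" using dist_gam[OF x(1), of 0] gam0 dist_sym[of xa_o x] by simp
  moreover have "0 \<le> xa_dist x (Ap x)" using dnonneg[OF x(1) Ap_XA] .
  moreover have "G 0 x = xa_dist x (Ap x) + D (reg x) (anc x) 0" unfolding G_def using x(2) by simp
  moreover have "T (reg x) \<le> D (reg x) (anc x) 0" by (rule D_ge_T)
  ultimately show ?thesis by linarith
qed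

lemma same_sig:
  assumes x: "x \<in> XA" and y: "y \<in> XA" and "psi y = 0" "xa_dist x y \<le> psi x"
  shows "sig y = sig x"
proof -
  have "xa_dist x (gam (sig y)) \<le> xa_dist x y + xa_dist y (gam (sig y))"
    using tri[OF x y gam_XA[OF sig_nonneg[OF y]]] .
  then have "xa_dist x (gam (sig y)) \<le> psi x" using d_gam_sig[OF y] assms(3,4) by simp
  then show ?thesis using d_gam_eq[OF x sig_nonneg[OF y]] by simp
qed

lemma contr_key:
  assumes x: "x \<in> XA" and y: "y \<in> XA" and d: "xa_dist x y \<le> psi x"
  shows "(\<not> spe x \<and> \<bar>sig x - sig y\<bar> \<le> a (reg x)) \<or> sig y = sig x"
proof (cases "spe x")
  case True
  then have "psi x = 0" unfolding psi_def by simp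
  then have "psi y \<le> 0" using psi_lip[OF y x] d dist_sym by simp
  then have "psi y = 0" using psi_nonneg[OF y] by simp
  then show ?thesis using same_sig[OF x y _ d] by simp
next
  case False
  show ?thesis
  proof (cases "inr (reg x) y")
    case True
    then have "\<not> spe y" "reg y = reg x" unfolding inr_def by auto
    then show ?thesis using sig_range[of x] sig_range[of y] False by auto
  next
    case F2: False
    have "psi x + psi y \<le> xa_dist x y" using far_bound[OF x y False F2] .
    then have "psi y = 0" using d psi_nonneg[OF y] by simp
    then show ?thesis using same_sig[OF x y _ d] by simp
  qed
qed

text \<open>depth function for closedness\<close>

definition ph :: "xa_pt \<Rightarrow> real" where
 "ph x = (case x of FP M z \<Rightarrow> if isspine M then 0 else 1
   | EP M p t \<Rightarrow> if isspine M then (if p = (a (length M), 0) then 0 else t)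
       else if spd 0 M + 1 = length M \<and> snd (last M) = False \<and> p = (0,0) then 1 - t else 1)"

lemma ph_edge:
  assumes "\<not> (isspine L \<and> p = (a (length L), 0))"
  shows "\<exists>f::real \<Rightarrow> real. (\<forall>u v. f u - f v \<le> \<bar>u - v\<bar>) \<and>
     (\<forall>u\<in>xa_edge L p. ph u = f (epar L p u))"
proof -
  have E: "u = FP L (lat p) \<or> u = edge_target L p \<or> (\<exists>t. u = EP L p t \<and> 0 < t \<and> t < 1)"
    if "u \<in> xa_edge L p" for u using edge_mem that by blast
  have e0: "epar L p (FP L (lat p)) = 0" by (rule epar_E0)
  have e1: "epar L p (edge_target L p) = 1" by (rule epar_E1)
  have et: "epar L p (EP L p t) = t" for t by (rule epar_EP)
  show ?thesis
  proof (cases "isspine L")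
    case True
    then have pn: "p \<noteq> (a (length L), 0)" using assms by simp
    have L: "L = Lw (length L)" using isspine_eq[OF True] .
    have tg: "edge_target L p = FP (L @ [(p, True)]) 0" using target_spine[of "length L" p] L by metis
    have "spd 0 (L @ [(p, True)]) = length L" using spd_snoc_spine[of "length L" p] pn L by metis
    then have ns: "\<not> isspine (L @ [(p, True)])" unfolding isspine_def by simp
    have "\<forall>u\<in>xa_edge L p. ph u = epar L p u"
    proof
      fix u assume "u \<in> xa_edge L p"
      then consider "u = FP L (lat p)" | "u = edge_target L p" | t where "u = EP L p t" using E by blast
      then show "ph u = epar L p u"
      proof cases
        case 1 then show ?thesis using e0 True unfolding ph_def by simp
      next
        case 2 then show ?thesis using e1 tg ns unfolding ph_def by simp
      next
        case 3 then show ?thesis using et True pn unfolding ph_def by simp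
      qed
    qed
    then show ?thesis by (intro exI[of _ "\<lambda>e. e"]) auto
  next
    case False
    have lt: "spd 0 L < length L" using nonspine_lt[OF False] .
    then have Lne: "L \<noteq> []" by auto
    show ?thesis
    proof (cases "spd 0 L + 1 = length L \<and> snd (last L) = False \<and> p = (0,0)")
      case True
      have tg: "edge_target L p = FP (butlast L) (lat (fst (last L)))" using True Lne unfolding edge_target_def by simp
      have "spd 0 (butlast L) = spd 0 L" using spd_butlast Lne True by simp
      moreover from True have tt: "Suc (spd 0 L) = length L" by simp
      moreover have "length (butlast L) = length L - 1" by simp
      ultimately have "spd 0 (butlast L) = length (butlast L)" by linarith
      then have sb: "isspine (butlast L)" unfolding isspine_def .
      have "\<forall>u\<in>xa_edge L p. ph u = 1 - epar L p u"
      proof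
        fix u assume "u \<in> xa_edge L p"
        then consider "u = FP L (lat p)" | "u = edge_target L p" | t where "u = EP L p t" using E by blast
        then show "ph u = 1 - epar L p u"
        proof cases
          case 1 then show ?thesis using e0 False unfolding ph_def by simp
        next
          case 2 then show ?thesis using e1 tg sb unfolding ph_def by simp
        next
          case 3 then show ?thesis using et False True unfolding ph_def by simp
        qed
      qed
      then show ?thesis by (intro exI[of _ "\<lambda>e. 1 - e"]) auto
    next
      case NI: False
      have "\<forall>u\<in>xa_edge L p. ph u = 1"
      proof
        fix u assume "u \<in> xa_edge L p"
        then consider "u = FP L (lat p)" | "u = edge_target L p" | t where "u = EP L p t" using E by blast
        then show "ph u = 1"
        proof cases
          case 1 then show ?thesis using False unfolding ph_def by simp
        next
          case 3
          have "ph (EP L p t) = (if spd 0 L + 1 = length L \<and> snd (last L) = False \<and> p = (0,0) then 1 - t else 1)"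
            unfolding ph_def using False by simp
          also have "\<dots> = 1" using NI by (rule if_not_P)
          finally show ?thesis using 3 by simp
        next
          case 2
          show ?thesis
          proof (cases "L \<noteq> [] \<and> snd (last L) = False \<and> p = (0, 0)")
            case True
            then have u: "u = FP (butlast L) (lat (fst (last L)))" using 2 unfolding edge_target_def by simp
            have "spd 0 (butlast L) = spd 0 L" using spd_butlast True by simp
            then have "\<not> isspine (butlast L)" unfolding isspine_def using NI True lt by auto
            then show ?thesis using u unfolding ph_def by simp
          next
            case F3: False
            then have u: "u = FP (L @ [(p, True)]) 0" using 2 unfolding edge_target_def if_not_P[OF F3] by simp
            then show ?thesis using nonspine_append[OF False] unfolding ph_def by simp
          qed
        qed
      qed
      then show ?thesis by (intro exI[of _ "\<lambda>e. 1"]) auto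
    qed
  qed
qed

lemma ph_lip: "xa_step x y c \<Longrightarrow> ph x - ph y \<le> c"
proof -
  assume st: "xa_step x y c"
  consider (F) L z w where "reduced L" "x = FP L z" "y = FP L w" "c = cmod (z - w)"
    | (S) k where "x \<in> xa_edge (Lw k) (a k, 0)" "y \<in> xa_edge (Lw k) (a k, 0)"
    | (O) L p where "\<not> (isspine L \<and> p = (a (length L), 0))" "x \<in> xa_edge L p" "y \<in> xa_edge L p"
         "c = \<bar>epar L p x - epar L p y\<bar>"
    using step_cases[OF st] by blast
  then show ?thesis
  proof cases
    case F then show ?thesis unfolding ph_def by simp
  next
    case S
    have "ph u = 0" if uin: "u \<in> xa_edge (Lw k) (a k, 0)" for u
    proof -
      consider "u = FP (Lw k) (of_int (a k))" | "u = FP (Lw (Suc k)) 0" | t where "u = EP (Lw k) (a k, 0) t"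
        using edge_spine[OF uin] by blast
      then show ?thesis unfolding ph_def by cases simp_all
    qed
    then show ?thesis using S step_nonneg[OF st] by simp
  next
    case O
    then obtain f where f: "\<forall>u v. f u - f v \<le> \<bar>u - v\<bar>" "\<forall>u\<in>xa_edge L p. ph u = f (epar L p u)"
      using ph_edge by blast
    then show ?thesis using O by simp
  qed
qed

lemma ph_Ap: "ph (Ap x) = 0" unfolding Ap_def ph_def by simp

lemma ph_zero:
  assumes "x \<in> XA" "\<not> spe x" "ph x \<le> 0"
  shows "x = Ap x"
proof (cases x)
  case (FP M z)
  then have sp: "isspine M" using assms(3) unfolding ph_def by (auto split: if_splits)
  have r: "reg x = length M" using FP sp unfolding isspine_def by simp
  have an: "anc x = z" using FP sp by simp
  have LM: "Lw (length M) = M" using isspine_eq[OF sp] by (rule sym)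
  have "Ap x = FP (Lw (length M)) z" unfolding Ap_def r an ..
  also have "\<dots> = x" using LM FP by simp
  finally show ?thesis by (rule sym)
next
  case (EP M p t)
  then have t: "0 < t" "t < 1" using assms(1) unfolding XA_def by auto
  then show ?thesis using assms(2,3) EP unfolding ph_def by (auto split: if_splits)
qed

lemma psi0_Z: "x \<in> XA \<Longrightarrow> psi x \<le> 0 \<Longrightarrow> x \<in> Z"
proof -
  assume x: "x \<in> XA" and p: "psi x \<le> 0"
  show ?thesis
  proof (cases "spe x")
    case True
    have "x = gam (epos x)" "epos x \<in> {0..}" using spe_gam[OF x True] by auto
    then show ?thesis unfolding Z_def by (rule image_eqI)
  next
    case False
    have r: "0 \<le> xa_dist x (Ap x)" using dnonneg[OF x Ap_XA] .
    have rr: "0 \<le> rho (reg x) (anc x)" unfolding rho_def by simp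
    have "xa_dist x (Ap x) = 0" "rho (reg x) (anc x) = 0" using p r rr False unfolding psi_def by auto
    moreover have "ph x - ph (Ap x) \<le> xa_dist x (Ap x)" using lower[OF _ x Ap_XA] ph_lip by blast
    ultimately have "ph x \<le> 0" using ph_Ap by simp
    then have xA: "x = Ap x" using ph_zero[OF x False] by simp
    define k where "k = reg x"
    define c where "c = cl k (anc x)"
    have wc: "anc x = complex_of_real c" using \<open>rho (reg x) (anc x) = 0\<close> unfolding rho_def c_def k_def by simp
    have x1: "x = FP (Lw k) (anc x)" using xA unfolding Ap_def k_def .
    have "FP (Lw k) (anc x) = FP (Lw k) (complex_of_real c)" using wc by simp
    then have x2: "x = FP (Lw k) (complex_of_real c)" by (rule trans[OF x1])
    have cr: "0 \<le> c" "c \<le> a k" using cl_range unfolding c_def by auto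
    have "gam (T k + c) = FP (Lw k) (complex_of_real c)" using gam_flat[of k "T k + c"] cr by simp
    then have "x = gam (T k + c)" using x2 by simp
    moreover have "T k + c \<in> {0..}" using T_nonneg[of k] cr by simp
    ultimately show ?thesis unfolding Z_def by (rule image_eqI)
  qed
qed

lemma Z_closed: "closed_d XA xa_dist Z"
  unfolding closed_d_def
proof (intro conjI ballI impI)
  show "Z \<subseteq> XA" unfolding Z_def using gam_XA by auto
next
  fix x assume x: "x \<in> XA" and h: "\<forall>e>0. \<exists>z\<in>Z. xa_dist x z < e"
  have "psi x \<le> 0"
  proof (rule ccontr)
    assume "\<not> psi x \<le> 0"
    then have "psi x > 0" by simp
    then obtain z where z: "z \<in> Z" "xa_dist x z < psi x" using h by blast
    have "z \<in> gam ` {0..}" using z(1) unfolding Z_def by simp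
    then obtain s where s: "0 \<le> s" "z = gam s" by auto
    then show False using d_gam_ge[OF x s(1)] z(2) by simp
  qed
  then show "x \<in> Z" using psi0_Z[OF x] by simp
qed

lemma Z_geo: "geo_ray XA xa_dist xa_o gam"
  unfolding geo_ray_def using gam0 gam_XA gam_dist by simp

lemma Z_contr:
  fixes lam :: "real \<Rightarrow> real" and C :: real
  assumes C: "0 \<le> C" and hk: "\<And>k. real_of_int (a k) \<le> C * lam (T k)" and m: "mono_on {0..} lam"
    and l0: "\<And>t. 0 \<le> t \<Longrightarrow> 0 \<le> lam t"
  shows "contracting XA xa_dist xa_o lam Z"
  unfolding contracting_def
proof (intro conjI exI[of _ C] ballI impI)
  show "closed_d XA xa_dist Z" by (rule Z_closed)
next
  fix x y assume x: "x \<in> XA" and y: "y \<in> XA" and d: "xa_dist x y \<le> setdist_d xa_dist x Z"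
  have d': "xa_dist x y \<le> psi x" using d setdist_Z[OF x] by simp
  have pr: "proj_d xa_dist x Z \<union> proj_d xa_dist y Z = {gam (sig x), gam (sig y)}"
    using proj_Z[OF x] proj_Z[OF y] by auto
  have diam: "diam_d xa_dist (proj_d xa_dist x Z \<union> proj_d xa_dist y Z) = \<bar>sig x - sig y\<bar>"
    unfolding pr using diam_two sig_nonneg x y by simp
  have n0: "0 \<le> xa_dist xa_o x" using dnonneg[OF _ x] unfolding XA_def xa_o_def reduced_def by auto
  show "diam_d xa_dist (proj_d xa_dist x Z \<union> proj_d xa_dist y Z) \<le> C * lam (xa_dist xa_o x)"
    unfolding diam
  proof (cases "sig y = sig x")
    case True then show "\<bar>sig x - sig y\<bar> \<le> C * lam (xa_dist xa_o x)" using C l0[OF n0] by simp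
  next
    case False
    then have ns: "\<not> spe x" and b: "\<bar>sig x - sig y\<bar> \<le> a (reg x)" using contr_key[OF x y d'] by auto
    have "T (reg x) \<le> xa_dist xa_o x" using norm_ge[OF x ns] .
    then have "lam (T (reg x)) \<le> lam (xa_dist xa_o x)" using m T_nonneg n0 unfolding mono_on_def by simp
    then have "C * lam (T (reg x)) \<le> C * lam (xa_dist xa_o x)" using C by (simp add: mult_left_mono)
    then show "\<bar>sig x - sig y\<bar> \<le> C * lam (xa_dist xa_o x)" using b hk[of "reg x"] by linarith
  qed
qed

lemma Z_not_contr:
  fixes lam :: "real \<Rightarrow> real"
  assumes "contracting XA xa_dist xa_o lam Z"
  shows "\<exists>c. \<forall>k>0. real_of_int (a k) \<le> c * lam (T k + a k)"
proof -
  obtain c where c: "\<forall>x\<in>XA. \<forall>y\<in>XA. xa_dist x y \<le> setdist_d xa_dist x Z \<longrightarrow>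
        diam_d xa_dist (proj_d xa_dist x Z \<union> proj_d xa_dist y Z) \<le> c * lam (xa_dist xa_o x)"
    using assms unfolding contracting_def by blast
  have "real_of_int (a k) \<le> c * lam (T k + a k)" if k: "k > 0" for k
  proof -
    define w where "w = Complex 0 (of_int (a k))"
    define w' where "w' = Complex (of_int (a k)) (of_int (a k))"
    define x where "x = FP (Lw k) w"
    define y where "y = FP (Lw k) w'"
    have xy: "x \<in> XA" "y \<in> XA" unfolding x_def y_def using Lw_XA by auto
    have a0: "0 < real_of_int (a k)" using a_real[of k] by simp
    have clx: "cl k w = 0" unfolding cl_def w_def by simp
    have cly: "cl k w' = a k" unfolding cl_def w'_def using a_real[of k] by simp
    have nx: "\<not> spe x" "reg x = k" "anc x = w" "Ap x = x" unfolding x_def Ap_def by auto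
    have ny: "\<not> spe y" "reg y = k" "anc y = w'" unfolding y_def by auto
    have e6: "cmod w = a k" unfolding w_def using a0 by (simp add: cmod_def)
    have "rho k w = cmod w" unfolding rho_def clx by simp
    then have rx: "rho k w = a k" using e6 by simp
    have psix: "psi x = a k" unfolding psi_def using nx rx dist_refl[of x] by simp
    have sx: "sig x = T k" unfolding sig_def using nx clx by simp
    have sy: "sig y = T k + a k" unfolding sig_def using ny cly by simp
    have "xa_dist x y \<le> cmod (w - w')" unfolding x_def y_def using dist_step[OF flat_step[OF reduced_Lwo]] .
    also have "cmod (w - w') = a k" unfolding w_def w'_def using a0 by (simp add: cmod_def)
    finally have dxy: "xa_dist x y \<le> setdist_d xa_dist x Z" using setdist_Z[OF xy(1)] psix by simp
    have diam: "diam_d xa_dist (proj_d xa_dist x Z \<union> proj_d xa_dist y Z) = a k"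
    proof -
      have "proj_d xa_dist x Z \<union> proj_d xa_dist y Z = {gam (sig x), gam (sig y)}"
        using proj_Z xy by auto
      moreover have "0 \<le> T k" "0 \<le> T k + a k" using T_nonneg[of k] a0 by auto
      ultimately show ?thesis using diam_two[of "T k" "T k + a k"] sx sy a0 by simp
    qed
    have "T k > 0" using T_smono[of 0 k] k by simp
    have e1: "xa_dist xa_o x = xa_dist x (gam 0)" using gam0 dist_sym[of xa_o x] by simp
    have e2: "xa_dist x (gam 0) = G 0 x" using dist_gam[OF xy(1)] by simp
    have e3: "G 0 x = xa_dist x (Ap x) + D k w 0" unfolding G_def using nx by simp
    have e4: "xa_dist x (Ap x) = 0" using nx(4) dist_refl[of x] by simp
    have e5: "D k w 0 = cmod w + T k" using D_lt[of 0 k w] \<open>T k > 0\<close> by simp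
    have dox: "xa_dist xa_o x = T k + a k" using e1 e2 e3 e4 e5 e6 by simp
    have "diam_d xa_dist (proj_d xa_dist x Z \<union> proj_d xa_dist y Z) \<le> c * lam (xa_dist xa_o x)"
      using c xy dxy by blast
    then show ?thesis using diam dox by (simp add: add.commute)
  qed
  then show ?thesis by blast
qed

end



primrec Tq :: "(real \<Rightarrow> real) \<Rightarrow> nat \<Rightarrow> real" where
  "Tq f 0 = 0" | "Tq f (Suc k) = Tq f k + real_of_int \<lfloor>f (Tq f k)\<rfloor> + 1"

lemma adm_ge1: "admissible f \<Longrightarrow> 0 \<le> t \<Longrightarrow> 1 \<le> f t"
  unfolding admissible_def by auto

lemma adm_mono: "admissible f \<Longrightarrow> 0 \<le> s \<Longrightarrow> s \<le> t \<Longrightarrow> f s \<le> f t"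
  unfolding admissible_def by (auto intro: mono_onD)

lemma floor_ge1: "1 \<le> (y::real) \<Longrightarrow> 1 \<le> \<lfloor>y\<rfloor>"
  by simp

lemma Tq_nonneg: "admissible f \<Longrightarrow> 0 \<le> Tq f k"
proof (induction k)
  case (Suc k)
  then have "1 \<le> f (Tq f k)" using adm_ge1 by blast
  then have "1 \<le> real_of_int \<lfloor>f (Tq f k)\<rfloor>" by simp
  then show ?case using Suc by simp
qed simp

lemma spine_inst: "admissible f \<Longrightarrow> spine (\<lambda>k. \<lfloor>f (Tq f k)\<rfloor>)"
  by unfold_locales (simp add: adm_ge1 Tq_nonneg)

lemma kappa_compare:
  assumes k: "admissible \<kappa>" and k': "admissible \<kappa>'" and r: "((\<lambda>t. \<kappa>' t / \<kappa> t) \<longlongrightarrow> 0) at_top"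
  shows "\<exists>C\<ge>0. \<forall>t\<ge>0. \<kappa>' t \<le> C * \<kappa> t"
proof -
  have "eventually (\<lambda>t. \<kappa>' t / \<kappa> t < 1) at_top" using order_tendstoD(2)[OF r] by simp
  then obtain N0 where N0: "\<forall>t\<ge>N0. \<kappa>' t / \<kappa> t < 1" unfolding eventually_at_top_linorder by blast
  define N where "N = max N0 0"
  define C where "C = max 1 (\<kappa>' N)"
  have "\<kappa>' t \<le> C * \<kappa> t" if t: "0 \<le> t" for t
  proof (cases "t \<le> N")
    case True
    have "\<kappa>' t \<le> \<kappa>' N" using adm_mono[OF k' t True] .
    also have "\<dots> \<le> C" unfolding C_def by simp
    also have "C \<le> C * \<kappa> t"
    proof -
      have C1: "1 \<le> C" unfolding C_def by simp
      have "C * 1 \<le> C * \<kappa> t" using mult_left_mono[OF adm_ge1[OF k t], of C] C1 by simp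
      then show ?thesis by simp
    qed
    finally show ?thesis .
  next
    case False
    then have "\<kappa>' t / \<kappa> t < 1" using N0 unfolding N_def by simp
    moreover have "0 < \<kappa> t" using adm_ge1[OF k t] by simp
    ultimately have "\<kappa>' t < \<kappa> t" by (simp add: divide_less_eq)
    have C1: "1 \<le> C" unfolding C_def by simp
    have "1 * \<kappa> t \<le> C * \<kappa> t" using mult_right_mono[OF C1, of "\<kappa> t"] adm_ge1[OF k t] by simp
    then show ?thesis using \<open>\<kappa>' t < \<kappa> t\<close> by simp
  qed
  moreover have "0 \<le> C" unfolding C_def by simp
  ultimately show ?thesis by blast
qed

lemma final_contra:
  fixes T :: "nat \<Rightarrow> real"
  assumes k: "admissible \<kappa>" and k': "admissible \<kappa>'" and r: "((\<lambda>t. \<kappa>' t / \<kappa> t) \<longlongrightarrow> 0) at_top"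
    and Tge: "\<And>k. real k \<le> T k"
    and h: "\<forall>k>0. real_of_int \<lfloor>\<kappa> (T k)\<rfloor> \<le> c * \<kappa>' (T k + real_of_int \<lfloor>\<kappa> (T k)\<rfloor>)"
  shows False
proof (cases "c \<le> 0")
  case True
  have T1: "0 \<le> T 1" using Tge[of 1] by simp
  have "1 \<le> \<kappa> (T 1)" using adm_ge1[OF k T1] .
  then have A1: "1 \<le> real_of_int \<lfloor>\<kappa> (T 1)\<rfloor>" by simp
  have "1 \<le> \<kappa>' (T 1 + real_of_int \<lfloor>\<kappa> (T 1)\<rfloor>)" using adm_ge1[OF k'] T1 A1 by simp
  then have "c * \<kappa>' (T 1 + real_of_int \<lfloor>\<kappa> (T 1)\<rfloor>) \<le> 0" using True by (simp add: mult_nonpos_nonneg)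
  moreover have "real_of_int \<lfloor>\<kappa> (T 1)\<rfloor> \<le> c * \<kappa>' (T 1 + real_of_int \<lfloor>\<kappa> (T 1)\<rfloor>)"
    using h by simp
  ultimately show False using A1 by linarith
next
  case False
  then have c: "0 < c" by simp
  have "eventually (\<lambda>t. \<kappa>' t / \<kappa> t < 1 / (4 * c)) at_top" using order_tendstoD(2)[OF r] c by simp
  then obtain N1 where N1: "\<forall>t\<ge>N1. \<kappa>' t / \<kappa> t < 1 / (4 * c)" unfolding eventually_at_top_linorder by blast
  have r2: "((\<lambda>t. \<kappa> t / t) \<longlongrightarrow> 0) at_top" using k unfolding admissible_def by blast
  have "eventually (\<lambda>t. \<kappa> t / t < 1) at_top" using order_tendstoD(2)[OF r2] by simp
  then obtain N2 where N2: "\<forall>t\<ge>N2. \<kappa> t / t < 1" unfolding eventually_at_top_linorder by blast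
  define N where "N = max (max N1 N2) 1"
  define kk where "kk = Suc (nat \<lceil>N\<rceil>)"
  define t where "t = T kk"
  have tN: "N \<le> t"
  proof -
    have "N \<le> real (nat \<lceil>N\<rceil>)" by (rule real_nat_ceiling_ge)
    also have "\<dots> \<le> real kk" unfolding kk_def by simp
    also have "\<dots> \<le> t" unfolding t_def by (rule Tge)
    finally show ?thesis .
  qed
  have t1: "1 \<le> t" "N1 \<le> t" "N2 \<le> t" using tN unfolding N_def by auto
  define y where "y = \<kappa> t"
  define A where "A = real_of_int \<lfloor>y\<rfloor>"
  have y1: "1 \<le> y" unfolding y_def using adm_ge1[OF k] t1 by simp
  have Ay1: "A \<le> y" unfolding A_def by simp
  have Ay2: "y - 1 < A" unfolding A_def by simp
  have Ay3: "1 \<le> A" unfolding A_def using y1 by simp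
  have Ay: "A \<le> y" "y < 2 * A" using Ay1 Ay2 Ay3 by linarith+
  have "\<kappa> t / t < 1" using N2 t1(3) by blast
  then have "y / t < 1" unfolding y_def .
  then have yt: "y < t" using t1 by (simp add: divide_less_eq)
  have "\<kappa>' t / \<kappa> t < 1 / (4 * c)" using N1 t1(2) by blast
  then have "\<kappa>' t / y < 1 / (4 * c)" unfolding y_def .
  then have k't: "4 * c * \<kappa>' t < y" using y1 c by (simp add: divide_less_eq field_simps)
  have m: "\<kappa>' (t + A) \<le> \<kappa>' (2 * t)"
    using adm_mono[OF k', of "t + A" "2 * t"] Ay yt t1 y1 by simp
  have conc: "concave_on {0..} \<kappa>'" using k' unfolding admissible_def by blast
  have "(1 - 1/2) * \<kappa>' 0 + 1/2 * \<kappa>' (2 * t) \<le> \<kappa>' ((1 - 1/2) *\<^sub>R 0 + (1/2) *\<^sub>R (2 * t))"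
    using concave_onD[OF conc, of "1/2" 0 "2 * t"] t1 by simp
  then have "\<kappa>' 0 / 2 + \<kappa>' (2 * t) / 2 \<le> \<kappa>' t" by simp
  moreover have "1 \<le> \<kappa>' 0" using adm_ge1[OF k'] by simp
  ultimately have c2: "\<kappa>' (2 * t) \<le> 2 * \<kappa>' t" by simp
  have "A \<le> c * \<kappa>' (t + A)" using h unfolding t_def A_def y_def kk_def by simp
  also have "\<dots> \<le> c * \<kappa>' (2 * t)" using m c by simp
  also have "\<dots> \<le> c * (2 * \<kappa>' t)" using c2 c by simp
  finally show False using k't Ay by simp
qed

theorem proposition6p3:
  fixes \<kappa> \<kappa>' :: "real \<Rightarrow> real"
  assumes "admissible \<kappa>" and "admissible \<kappa>'"
    and "((\<lambda>t. \<kappa>' t / \<kappa> t) \<longlongrightarrow> 0) at_top"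
  shows "bdry XA xa_dist xa_o \<kappa>' \<subset> bdry XA xa_dist xa_o \<kappa>"
proof -
  have oXA: "xa_o \<in> XA" unfolding XA_def xa_o_def reduced_def by auto
  have sub: "bdry XA xa_dist xa_o \<kappa>' \<subseteq> bdry XA xa_dist xa_o \<kappa>"
  proof
    fix X assume "X \<in> bdry XA xa_dist xa_o \<kappa>'"
    then obtain \<gamma> where X: "X = \<gamma> ` {0..}" "geo_ray XA xa_dist xa_o \<gamma>" "contracting XA xa_dist xa_o \<kappa>' X"
      unfolding bdry_def by blast
    obtain C where C: "0 \<le> C" "\<forall>t\<ge>0. \<kappa>' t \<le> C * \<kappa> t" using kappa_compare[OF assms] by blast
    obtain c where c: "closed_d XA xa_dist X" "\<forall>x\<in>XA. \<forall>y\<in>XA. xa_dist x y \<le> setdist_d xa_dist x X \<longrightarrow>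
        diam_d xa_dist (proj_d xa_dist x X \<union> proj_d xa_dist y X) \<le> c * \<kappa>' (xa_dist xa_o x)"
      using X(3) unfolding contracting_def by blast
    have "contracting XA xa_dist xa_o \<kappa> X"
      unfolding contracting_def
    proof (intro conjI exI[of _ "max c 0 * C"] ballI impI)
      show "closed_d XA xa_dist X" by (rule c(1))
    next
      fix x y assume x: "x \<in> XA" and y: "y \<in> XA" and d: "xa_dist x y \<le> setdist_d xa_dist x X"
      have n: "0 \<le> xa_dist xa_o x" using dnonneg[OF oXA x] .
      have k1: "0 \<le> \<kappa>' (xa_dist xa_o x)" using adm_ge1[OF assms(2) n] by simp
      have "diam_d xa_dist (proj_d xa_dist x X \<union> proj_d xa_dist y X) \<le> c * \<kappa>' (xa_dist xa_o x)"
        using c(2) x y d by blast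
      also have "\<dots> \<le> max c 0 * \<kappa>' (xa_dist xa_o x)" using k1 by (simp add: mult_right_mono)
      also have "\<dots> \<le> max c 0 * (C * \<kappa> (xa_dist xa_o x))" using C(2) n by (simp add: mult_left_mono)
      finally show "diam_d xa_dist (proj_d xa_dist x X \<union> proj_d xa_dist y X) \<le> max c 0 * C * \<kappa> (xa_dist xa_o x)"
        by (simp add: mult.assoc)
    qed
    then show "X \<in> bdry XA xa_dist xa_o \<kappa>" unfolding bdry_def using X(1,2) by blast
  qed
  define a where "a = (\<lambda>k. \<lfloor>\<kappa> (Tq \<kappa> k)\<rfloor>)"
  interpret S: spine a unfolding a_def by (rule spine_inst[OF assms(1)])
  have TT: "S.T k = Tq \<kappa> k" for k
  proof (induction k)
    case 0 show ?case by simp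
  next
    case (Suc k)
    have "S.T (Suc k) = S.T k + a k + 1" by simp
    then show ?case using Suc by (simp add: a_def)
  qed
  have inZ: "S.Z \<in> bdry XA xa_dist xa_o \<kappa>"
  proof -
    have "contracting XA xa_dist xa_o \<kappa> S.Z"
    proof (rule S.Z_contr[of 1])
      show "real_of_int (a k) \<le> 1 * \<kappa> (S.T k)" for k unfolding TT by (simp add: a_def)
      show "mono_on {0..} \<kappa>" using assms(1) unfolding admissible_def by blast
      show "0 \<le> \<kappa> t" if "0 \<le> t" for t using adm_ge1[OF assms(1) that] by simp
    qed simp
    then have c: "contracting XA xa_dist xa_o \<kappa> (S.gam ` {0..})" unfolding S.Z_def .
    show ?thesis unfolding bdry_def mem_Collect_eq S.Z_def
      by (rule exI[of _ S.gam]) (simp add: S.Z_geo c)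
  qed
  have notZ: "S.Z \<notin> bdry XA xa_dist xa_o \<kappa>'"
  proof
    assume "S.Z \<in> bdry XA xa_dist xa_o \<kappa>'"
    then have "\<exists>\<gamma>. S.Z = \<gamma> ` {0..} \<and> (geo_ray XA xa_dist xa_o \<gamma> \<and> contracting XA xa_dist xa_o \<kappa>' (\<gamma> ` {0..}))"
      by (simp only: bdry_def mem_Collect_eq)
    then obtain \<gamma> where g: "S.Z = \<gamma> ` {0..} \<and> (geo_ray XA xa_dist xa_o \<gamma> \<and> contracting XA xa_dist xa_o \<kappa>' (\<gamma> ` {0..}))" ..
    then have "contracting XA xa_dist xa_o \<kappa>' S.Z" by simp
    then obtain c where "\<forall>k>0. real_of_int (a k) \<le> c * \<kappa>' (S.T k + a k)" using S.Z_not_contr by blast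
    then have h: "\<forall>k>0. real_of_int \<lfloor>\<kappa> (S.T k)\<rfloor> \<le> c * \<kappa>' (S.T k + real_of_int \<lfloor>\<kappa> (S.T k)\<rfloor>)"
      unfolding TT by (simp add: a_def)
    show False using final_contra[OF assms _ h] S.T_ge by blast
  qed
  have "bdry XA xa_dist xa_o \<kappa>' \<noteq> bdry XA xa_dist xa_o \<kappa>"
  proof
    assume "bdry XA xa_dist xa_o \<kappa>' = bdry XA xa_dist xa_o \<kappa>"
    then show False using inZ notZ by simp
  qed
  then show ?thesis using sub by (intro psubsetI)
qed


end
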